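(* Let $\Phi=(A;\{E_i\}_{i=0}^d;A^*;\{E^*_i\}_{i=0}^d)$ be a tridiagonal system on $V$ with $d\ge1$, such that $(A,A^* )$ satisfies the $q$-Serre relations, with $E_iV$ the eigenspace of $A$ for $\theta_i=q^{2i-d}$ and $E^*_iV$ the eigenspace of $A^*$ for $\theta^*_i=q^{d-2i}$. Let $\{U_i\}_{i=0}^d$ be its split decomposition, $K:V\to V$ the linear map acting on $U_i$ as $q^{d-2i}I$, $t$ a scalar, $B=A$, $B^*=tA^*+(1-t)K$, and $E'_i$ the primitive idempotent of $B^*$ for $\theta^*_i$. Then for $0\le i\le d$, $$B^*E_iV\subseteq E_{i-1}V+E_iV+E_{i+1}V\quad(E_{-1}=E_{d+1}=0),\qquad BE'_iV\subseteq E'_{i-1}V+E'_iV+E'_{i+1}V\quad(E'_{-1}=E'_{d+1}=0).$$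
   Context: $\mathcal K$ is an algebraically closed field; $V$ is a nonzero finite-dimensional vector space over $\mathcal K$; $q\in\mathcal K$ is nonzero and not a root of unity; $[3]_q=q^2+1+q^{-2}$. The $q$-Serre relations for $(X,Y)$: $X^3Y-[3]_qX^2YX+[3]_qXYX^2-YX^3=0$ and $Y^3X-[3]_qY^2XY+[3]_qYXY^2-XY^3=0$. Primitive idempotent of a diagonalizable $X$ for eigenvalue $\lambda_i$: $\prod_{j\ne i}\frac{X-\lambda_jI}{\lambda_i-\lambda_j}$. A tridiagonal system on $V$ is a sequence $(A;\{E_i\}_{i=0}^d;A^*;\{E^*_i\}_{i=0}^d)$ with $A,A^*$ diagonalizable, $\{E_i\}$, $\{E^*_i\}$ orderings of their primitive idempotents, $E_iA^*E_j=0$ and $E^*_iAE^*_j=0$ when $|i-j|>1$, and no subspaces other than $0,V$ invariant under both $A$ and $A^*$. Split decomposition: $U_i=(E^*_0V+\cdots+E^*_iV)\cap(E_iV+\cdots+E_dV)$; known: $V=U_0\oplus\cdots\oplus U_d$, $(A-\theta_iI)U_i\subseteq U_{i+1}$, $(A^*-\theta^*_iI)U_i\subseteq U_{i-1}$ ($U_{-1}=U_{d+1}=0$). It is a fact (proved in the paper) that $B^*$ is diagonalizable with eigenvalues $\theta^*_0,\dots,\theta^*_d$, so $E'_i$ is defined. *)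

theory Defs
  imports "Jordan_Normal_Form.Char_Poly" "HOL-Computational_Algebra.Polynomial"
begin

text \<open>Linear maps on V = K^n are n x n matrices; subspaces are sets of vectors.\<close>

definition alg_closed_field :: "'a::field itself \<Rightarrow> bool" where
  "alg_closed_field _ \<longleftrightarrow> (\<forall>p :: 'a poly. degree p \<ge> 1 \<longrightarrow> (\<exists>x. poly p x = 0))"

definition diagonalizable_mat :: "'a::field mat \<Rightarrow> bool" where
  "diagonalizable_mat A \<longleftrightarrow> (\<exists>D. diagonal_mat D \<and> similar_mat A D)"

fun mat_prod_list :: "nat \<Rightarrow> 'a::field mat list \<Rightarrow> 'a mat" where
  "mat_prod_list n [] = 1\<^sub>m n"
| "mat_prod_list n (M # Ms) = M * mat_prod_list n Ms"

definition prim_idem :: "nat \<Rightarrow> nat \<Rightarrow> 'a::field mat \<Rightarrow> (nat \<Rightarrow> 'a) \<Rightarrow> nat \<Rightarrow> 'a mat" where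
  "prim_idem n d X lam i = mat_prod_list n
     (map (\<lambda>j. (1 / (lam i - lam j)) \<cdot>\<^sub>m (X - lam j \<cdot>\<^sub>m 1\<^sub>m n)) (filter (\<lambda>j. j \<noteq> i) [0..<Suc d]))"

definition mat_image :: "nat \<Rightarrow> 'a::field mat \<Rightarrow> 'a vec set" where
  "mat_image n M = {M *\<^sub>v v | v. v \<in> carrier_vec n}"

definition map_image :: "'a::field mat \<Rightarrow> 'a vec set \<Rightarrow> 'a vec set" where
  "map_image M W = {M *\<^sub>v w | w. w \<in> W}"

fun subspace_sum :: "nat \<Rightarrow> 'a::field vec set list \<Rightarrow> 'a vec set" where
  "subspace_sum n [] = {0\<^sub>v n}"
| "subspace_sum n (W # Ws) = {w + u | w u. w \<in> W \<and> u \<in> subspace_sum n Ws}"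

definition is_subspace :: "nat \<Rightarrow> 'a::field vec set \<Rightarrow> bool" where
  "is_subspace n W \<longleftrightarrow> W \<subseteq> carrier_vec n \<and> 0\<^sub>v n \<in> W \<and>
     (\<forall>u\<in>W. \<forall>w\<in>W. u + w \<in> W) \<and> (\<forall>c. \<forall>w\<in>W. c \<cdot>\<^sub>v w \<in> W)"

definition invariant_sub :: "'a::field mat \<Rightarrow> 'a vec set \<Rightarrow> bool" where
  "invariant_sub M W \<longleftrightarrow> (\<forall>w\<in>W. M *\<^sub>v w \<in> W)"

definition tridiagonal_system ::
  "nat \<Rightarrow> nat \<Rightarrow> 'a::field mat \<Rightarrow> (nat \<Rightarrow> 'a) \<Rightarrow> 'a mat \<Rightarrow> (nat \<Rightarrow> 'a) \<Rightarrow> bool" where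
  "tridiagonal_system n d A th As ths \<longleftrightarrow>
     A \<in> carrier_mat n n \<and> As \<in> carrier_mat n n \<and>
     diagonalizable_mat A \<and> diagonalizable_mat As \<and>
     inj_on th {0..d} \<and> inj_on ths {0..d} \<and>
     {k. eigenvalue A k} = th ` {0..d} \<and> {k. eigenvalue As k} = ths ` {0..d} \<and>
     (\<forall>i\<le>d. \<forall>j\<le>d. (i > j + 1 \<or> j > i + 1) \<longrightarrow>
        prim_idem n d A th i * As * prim_idem n d A th j = 0\<^sub>m n n) \<and>
     (\<forall>i\<le>d. \<forall>j\<le>d. (i > j + 1 \<or> j > i + 1) \<longrightarrow>
        prim_idem n d As ths i * A * prim_idem n d As ths j = 0\<^sub>m n n) \<and>
     (\<forall>W. is_subspace n W \<and> invariant_sub A W \<and> invariant_sub As W \<longrightarrow>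
        W = {0\<^sub>v n} \<or> W = carrier_vec n)"

definition split_comp ::
  "nat \<Rightarrow> nat \<Rightarrow> 'a::field mat \<Rightarrow> (nat \<Rightarrow> 'a) \<Rightarrow> 'a mat \<Rightarrow> (nat \<Rightarrow> 'a) \<Rightarrow> nat \<Rightarrow> 'a vec set" where
  "split_comp n d A th As ths i =
     subspace_sum n (map (\<lambda>k. mat_image n (prim_idem n d As ths k)) [0..<Suc i]) \<inter>
     subspace_sum n (map (\<lambda>k. mat_image n (prim_idem n d A th k)) [i..<Suc d])"

text \<open>E_{i-1}V + E_iV + E_{i+1}V with E_{-1} = E_{d+1} = 0.\<close>
definition nbr_sum :: "nat \<Rightarrow> nat \<Rightarrow> 'a::field mat \<Rightarrow> (nat \<Rightarrow> 'a) \<Rightarrow> nat \<Rightarrow> 'a vec set" where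
  "nbr_sum n d X lam i = subspace_sum n
     (map (\<lambda>k. mat_image n (prim_idem n d X lam k)) (filter (\<lambda>k. i \<le> k + 1 \<and> k \<le> i + 1) [0..<Suc d]))"

definition q_serre :: "'a::field \<Rightarrow> 'a mat \<Rightarrow> 'a mat \<Rightarrow> bool" where
  "q_serre q X Y \<longleftrightarrow> (let c = q^2 + 1 + inverse (q^2) in
     X*X*X*Y - c \<cdot>\<^sub>m (X*X*Y*X) + c \<cdot>\<^sub>m (X*Y*X*X) - Y*X*X*X = 0\<^sub>m (dim_row X) (dim_row X) \<and>
     Y*Y*Y*X - c \<cdot>\<^sub>m (Y*Y*X*Y) + c \<cdot>\<^sub>m (Y*X*Y*Y) - X*Y*Y*Y = 0\<^sub>m (dim_row X) (dim_row X))"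

end

theory Submission
  imports Defs
begin

lemma smult_mat_mult_vec:
  "A \<in> carrier_mat nr nc \<Longrightarrow> v \<in> carrier_vec nc \<Longrightarrow> (c \<cdot>\<^sub>m A) *\<^sub>v v = c \<cdot>\<^sub>v (A *\<^sub>v v)"
  by (intro eq_vecI) (auto simp: scalar_prod_def sum_distrib_left mult.assoc)

lemma mult_zero_vec_right:
  "A \<in> carrier_mat nr nc \<Longrightarrow> A *\<^sub>v 0\<^sub>v nc = 0\<^sub>v nr"
  by (intro eq_vecI) (auto simp: scalar_prod_def)

lemma mat_eq_vecI:
  fixes A B :: "'a::field mat"
  assumes "A \<in> carrier_mat n n" "B \<in> carrier_mat n n"
    and "\<And>v. v \<in> carrier_vec n \<Longrightarrow> A *\<^sub>v v = B *\<^sub>v v"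
  shows "A = B"
proof (rule eq_matI)
  fix i j assume i: "i < dim_row B" and j: "j < dim_col B"
  have "A *\<^sub>v unit_vec n j = B *\<^sub>v unit_vec n j" using assms(3) by simp
  hence "(A *\<^sub>v unit_vec n j) $ i = (B *\<^sub>v unit_vec n j) $ i" by simp
  moreover have "(A *\<^sub>v unit_vec n j) $ i = A $$ (i, j)" using assms(1,2) i j by auto
  moreover have "(B *\<^sub>v unit_vec n j) $ i = B $$ (i, j)" using assms(1,2) i j by auto
  ultimately show "A $$ (i, j) = B $$ (i, j)" by simp
qed (use assms in auto)

fun vs :: "nat \<Rightarrow> (nat \<Rightarrow> 'a::field vec) \<Rightarrow> nat \<Rightarrow> 'a vec" where
  "vs n f 0 = 0\<^sub>v n"
| "vs n f (Suc m) = vs n f m + f m"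

lemma vs_carrier: "(\<And>k. k < m \<Longrightarrow> f k \<in> carrier_vec n) \<Longrightarrow> vs n f m \<in> carrier_vec n"
  by (induction m) auto

lemma vs_cong: "(\<And>k. k < m \<Longrightarrow> f k = g k) \<Longrightarrow> vs n f m = vs n g m"
  by (induction m) auto

lemma vs_index: "(\<And>k. k < m \<Longrightarrow> f k \<in> carrier_vec n) \<Longrightarrow> i < n \<Longrightarrow> vs n f m $ i = (\<Sum>k<m. f k $ i)"
proof (induction m)
  case 0 then show ?case by simp
next
  case (Suc m)
  have "vs n f m \<in> carrier_vec n" "f m \<in> carrier_vec n" using Suc.prems by (auto intro: vs_carrier)
  then have d: "dim_vec (vs n f m) = n" "dim_vec (f m) = n" by auto
  have "(vs n f m + f m) $ i = vs n f m $ i + f m $ i" using d Suc.prems(2) by simp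
  then show ?case using Suc by simp
qed

lemma vs_zero: "vs n (\<lambda>k. 0\<^sub>v n) m = 0\<^sub>v n"
  by (induction m) auto

lemma vs_mat: assumes "M \<in> carrier_mat nr n" "\<And>k. k < m \<Longrightarrow> f k \<in> carrier_vec n"
  shows "M *\<^sub>v vs n f m = vs nr (\<lambda>k. M *\<^sub>v f k) m"
  using assms(2) proof (induction m)
  case 0 then show ?case using assms(1) by (simp add: mult_zero_vec_right)
next
  case (Suc m)
  then show ?case using assms(1) by (simp add: mult_add_distrib_mat_vec[OF assms(1)] vs_carrier)
qed

lemma vs_add: "(\<And>k. k < m \<Longrightarrow> f k \<in> carrier_vec n) \<Longrightarrow> (\<And>k. k < m \<Longrightarrow> g k \<in> carrier_vec n) \<Longrightarrow>
  vs n (\<lambda>k. f k + g k) m = vs n f m + vs n g m"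
proof -
  assume f: "\<And>k. k < m \<Longrightarrow> f k \<in> carrier_vec n" and g: "\<And>k. k < m \<Longrightarrow> g k \<in> carrier_vec n"
  have fg: "\<And>k. k < m \<Longrightarrow> f k + g k \<in> carrier_vec n" using f g by auto
  have d: "dim_vec (vs n f m) = n" "dim_vec (vs n g m) = n" "dim_vec (vs n (\<lambda>k. f k + g k) m) = n"
    using vs_carrier[OF f] vs_carrier[OF g] vs_carrier[OF fg] by auto
  show ?thesis
  proof (intro eq_vecI)
    fix i assume "i < dim_vec (vs n f m + vs n g m)"
    hence i: "i < n" using d by simp
    have "(\<Sum>k<m. (f k + g k) $ i) = (\<Sum>k<m. f k $ i + g k $ i)"
    proof (intro sum.cong refl)
      fix k assume "k \<in> {..<m}"
      hence "f k \<in> carrier_vec n" "g k \<in> carrier_vec n" using f g by auto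
      thus "(f k + g k) $ i = f k $ i + g k $ i" using i by auto
    qed
    then show "vs n (\<lambda>k. f k + g k) m $ i = (vs n f m + vs n g m) $ i"
      using i d by (simp add: vs_index[OF f] vs_index[OF g] vs_index[OF fg] sum.distrib)
  qed (use d in auto)
qed

lemma vs_smult: "(\<And>k. k < m \<Longrightarrow> f k \<in> carrier_vec n) \<Longrightarrow>
  vs n (\<lambda>k. c \<cdot>\<^sub>v f k) m = c \<cdot>\<^sub>v vs n f m"
proof -
  assume f: "\<And>k. k < m \<Longrightarrow> f k \<in> carrier_vec n"
  have fg: "\<And>k. k < m \<Longrightarrow> c \<cdot>\<^sub>v f k \<in> carrier_vec n" using f by auto
  have d: "dim_vec (vs n f m) = n" "dim_vec (vs n (\<lambda>k. c \<cdot>\<^sub>v f k) m) = n"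
    using vs_carrier[OF f] vs_carrier[OF fg] by auto
  show ?thesis
  proof (intro eq_vecI)
    fix i assume "i < dim_vec (c \<cdot>\<^sub>v vs n f m)"
    hence i: "i < n" using d by simp
    have "(\<Sum>k<m. (c \<cdot>\<^sub>v f k) $ i) = (\<Sum>k<m. c * f k $ i)"
    proof (intro sum.cong refl)
      fix k assume "k \<in> {..<m}"
      hence "f k \<in> carrier_vec n" using f by auto
      thus "(c \<cdot>\<^sub>v f k) $ i = c * f k $ i" using i by auto
    qed
    then show "vs n (\<lambda>k. c \<cdot>\<^sub>v f k) m $ i = (c \<cdot>\<^sub>v vs n f m) $ i"
      using i d by (simp add: vs_index[OF f] vs_index[OF fg] sum_distrib_left)
  qed (use d in auto)
qed

lemma vs_delta: "u \<in> carrier_vec n \<Longrightarrow> vs n (\<lambda>j. if j = k then u else 0\<^sub>v n) m = (if k < m then u else 0\<^sub>v n)"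
  by (induction m) auto

declare vs.simps(2)[simp del]

lemma mpl_carrier: "(\<And>x. x \<in> set xs \<Longrightarrow> F x \<in> carrier_mat n n) \<Longrightarrow> mat_prod_list n (map F xs) \<in> carrier_mat n n"
  by (induction xs) (auto intro!: mult_carrier_mat)

lemma mpl_eig: assumes "u \<in> carrier_vec n" "\<And>x. x \<in> set xs \<Longrightarrow> F x \<in> carrier_mat n n \<and> F x *\<^sub>v u = c x \<cdot>\<^sub>v u"
  shows "mat_prod_list n (map F xs) *\<^sub>v u = prod_list (map c xs) \<cdot>\<^sub>v u"
  using assms(2) proof (induction xs)
  case Nil then show ?case using assms(1) by simp
next
  case (Cons x xs)
  have P: "mat_prod_list n (map F xs) \<in> carrier_mat n n" using Cons.prems by (auto intro: mpl_carrier)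
  have Fx: "F x \<in> carrier_mat n n" "F x *\<^sub>v u = c x \<cdot>\<^sub>v u" using Cons.prems by auto
  have "mat_prod_list n (map F (x # xs)) *\<^sub>v u = F x *\<^sub>v (mat_prod_list n (map F xs) *\<^sub>v u)"
    using P Fx assms(1) by simp
  also have "\<dots> = F x *\<^sub>v (prod_list (map c xs) \<cdot>\<^sub>v u)" using Cons by simp
  also have "\<dots> = prod_list (map c xs) \<cdot>\<^sub>v (c x \<cdot>\<^sub>v u)" using Fx assms(1) by (simp add: mult_mat_vec)
  also have "\<dots> = prod_list (map c (x # xs)) \<cdot>\<^sub>v u" by (simp add: smult_smult_assoc mult.commute)
  finally show ?case .
qed

lemma prim_idem_carrier: "X \<in> carrier_mat n n \<Longrightarrow> prim_idem n d X lam i \<in> carrier_mat n n"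
  unfolding prim_idem_def by (rule mpl_carrier) auto

lemma prim_idem_eig:
  fixes X :: "'a::field mat"
  assumes X: "X \<in> carrier_mat n n" and inj: "inj_on lam {0..d}"
    and u: "u \<in> carrier_vec n" "X *\<^sub>v u = lam k \<cdot>\<^sub>v u" and k: "k \<le> d" and j: "j \<le> d"
  shows "prim_idem n d X lam j *\<^sub>v u = (if j = k then u else 0\<^sub>v n)"
proof -
  let ?c = "\<lambda>x. (lam k - lam x) / (lam j - lam x)"
  have "prim_idem n d X lam j *\<^sub>v u = prod_list (map ?c (filter (\<lambda>x. x \<noteq> j) [0..<Suc d])) \<cdot>\<^sub>v u"
    unfolding prim_idem_def
  proof (rule mpl_eig[OF u(1)])
    fix x assume "x \<in> set (filter (\<lambda>x. x \<noteq> j) [0..<Suc d])"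
    let ?F = "(1 / (lam j - lam x)) \<cdot>\<^sub>m (X - lam x \<cdot>\<^sub>m 1\<^sub>m n)"
    have F: "?F \<in> carrier_mat n n" using X by auto
    have "(X - lam x \<cdot>\<^sub>m 1\<^sub>m n) *\<^sub>v u = X *\<^sub>v u - (lam x \<cdot>\<^sub>m 1\<^sub>m n) *\<^sub>v u"
      using X u by (intro minus_mult_distrib_mat_vec) auto
    also have "\<dots> = (lam k - lam x) \<cdot>\<^sub>v u" using u X
      by (intro eq_vecI) (auto simp: smult_mat_mult_vec algebra_simps)
    finally have eq1: "(X - lam x \<cdot>\<^sub>m 1\<^sub>m n) *\<^sub>v u = (lam k - lam x) \<cdot>\<^sub>v u" .
    have "?F *\<^sub>v u = (1 / (lam j - lam x)) \<cdot>\<^sub>v ((X - lam x \<cdot>\<^sub>m 1\<^sub>m n) *\<^sub>v u)" using X u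
      by (intro smult_mat_mult_vec[of _ n n]) auto
    also have "\<dots> = (1 / (lam j - lam x)) \<cdot>\<^sub>v ((lam k - lam x) \<cdot>\<^sub>v u)" using eq1 by simp
    also have "\<dots> = ?c x \<cdot>\<^sub>v u" by (simp add: smult_smult_assoc)
    finally have "?F *\<^sub>v u = ?c x \<cdot>\<^sub>v u" .
    then show "?F \<in> carrier_mat n n \<and> ?F *\<^sub>v u = ?c x \<cdot>\<^sub>v u" using F by simp
  qed
  also have "\<dots> = (if j = k then u else 0\<^sub>v n)"
  proof (cases "j = k")
    case True
    have "map ?c (filter (\<lambda>x. x \<noteq> j) [0..<Suc d]) = map (\<lambda>x. 1) (filter (\<lambda>x. x \<noteq> j) [0..<Suc d])"
    proof (rule map_cong[OF refl])
      fix x assume "x \<in> set (filter (\<lambda>x. x \<noteq> j) [0..<Suc d])"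
      hence "x \<le> d" "x \<noteq> j" by (auto simp del: upt_Suc)
      hence "lam j \<noteq> lam x" using inj j by (metis atLeastAtMost_iff inj_on_contraD zero_le)
      then show "?c x = 1" using True by simp
    qed
    moreover have "prod_list (map (\<lambda>x. 1::'a) xs) = 1" for xs :: "nat list" by (induction xs) auto
    ultimately have "prod_list (map ?c (filter (\<lambda>x. x \<noteq> j) [0..<Suc d])) = 1" by (simp only:)
    then show ?thesis using True by simp
  next
    case False
    have "k \<in> set (filter (\<lambda>x. x \<noteq> j) [0..<Suc d])" using False k by auto
    hence "prod_list (map ?c (filter (\<lambda>x. x \<noteq> j) [0..<Suc d])) = 0"
      by (subst prod_list_zero_iff) force
    then show ?thesis using False u by (simp only:) (intro eq_vecI, auto)
  qed
  finally show ?thesis .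
qed

locale edec =
  fixes n d :: nat and X :: "'a::field mat" and lam :: "nat \<Rightarrow> 'a"
  assumes X: "X \<in> carrier_mat n n" and inj: "inj_on lam {0..d}"
  and dec: "\<And>v. v \<in> carrier_vec n \<Longrightarrow> \<exists>f. (\<forall>k\<le>d. f k \<in> carrier_vec n \<and> X *\<^sub>v f k = lam k \<cdot>\<^sub>v f k) \<and> v = vs n f (Suc d)"
begin

abbreviation "E j \<equiv> prim_idem n d X lam j"

lemma E_carrier[simp]: "E j \<in> carrier_mat n n"
  using prim_idem_carrier[OF X] .

lemma E_dim[simp]: "dim_row (E j) = n" "dim_col (E j) = n"
  using carrier_matD[OF E_carrier] by auto

lemma E_vec_carrier[simp]: "v \<in> carrier_vec n \<Longrightarrow> E j *\<^sub>v v \<in> carrier_vec n"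
  by (rule mult_mat_vec_carrier[OF E_carrier])

lemma E_eig: "u \<in> carrier_vec n \<Longrightarrow> X *\<^sub>v u = lam k \<cdot>\<^sub>v u \<Longrightarrow> k \<le> d \<Longrightarrow> j \<le> d \<Longrightarrow>
   E j *\<^sub>v u = (if j = k then u else 0\<^sub>v n)"
  using prim_idem_eig[OF X inj] by blast

lemma E_vs: assumes f: "\<forall>k\<le>d. f k \<in> carrier_vec n \<and> X *\<^sub>v f k = lam k \<cdot>\<^sub>v f k" and j: "j \<le> d"
  shows "E j *\<^sub>v vs n f (Suc d) = f j"
proof -
  have "E j *\<^sub>v vs n f (Suc d) = vs n (\<lambda>k. E j *\<^sub>v f k) (Suc d)"
    using f by (intro vs_mat) auto
  also have "\<dots> = vs n (\<lambda>k. if k = j then f j else 0\<^sub>v n) (Suc d)"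
    using f j by (intro vs_cong) (auto simp: E_eig)
  also have "\<dots> = f j" using f j by (simp add: vs_delta)
  finally show ?thesis .
qed

lemma E_sum: assumes v: "v \<in> carrier_vec n" shows "vs n (\<lambda>j. E j *\<^sub>v v) (Suc d) = v"
proof -
  obtain f where f: "\<forall>k\<le>d. f k \<in> carrier_vec n \<and> X *\<^sub>v f k = lam k \<cdot>\<^sub>v f k" and vf: "v = vs n f (Suc d)"
    using dec[OF v] by blast
  have "vs n (\<lambda>j. E j *\<^sub>v v) (Suc d) = vs n f (Suc d)"
    using f by (intro vs_cong) (simp add: vf E_vs)
  then show ?thesis using vf by simp
qed

lemma E_comp: assumes v: "v \<in> carrier_vec n" and k: "k \<le> d"
  shows "X *\<^sub>v (E k *\<^sub>v v) = lam k \<cdot>\<^sub>v (E k *\<^sub>v v)"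
proof -
  obtain f where f: "\<forall>k\<le>d. f k \<in> carrier_vec n \<and> X *\<^sub>v f k = lam k \<cdot>\<^sub>v f k" and vf: "v = vs n f (Suc d)"
    using dec[OF v] by blast
  show ?thesis using E_vs[OF f k] f k vf by simp
qed

lemma E_E: assumes v: "v \<in> carrier_vec n" and "j \<le> d" "k \<le> d"
  shows "E j *\<^sub>v (E k *\<^sub>v v) = (if j = k then E k *\<^sub>v v else 0\<^sub>v n)"
proof -
  have c: "E k *\<^sub>v v \<in> carrier_vec n" by (rule mult_mat_vec_carrier[OF E_carrier v])
  show ?thesis using E_eig[OF c E_comp[OF v assms(3)] assms(3) assms(2)] by simp
qed

lemma E_X: assumes v: "v \<in> carrier_vec n" and j: "j \<le> d"
  shows "E j *\<^sub>v (X *\<^sub>v v) = lam j \<cdot>\<^sub>v (E j *\<^sub>v v)"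
proof -
  obtain f where f: "\<forall>k\<le>d. f k \<in> carrier_vec n \<and> X *\<^sub>v f k = lam k \<cdot>\<^sub>v f k" and vf: "v = vs n f (Suc d)"
    using dec[OF v] by blast
  have g: "\<forall>k\<le>d. lam k \<cdot>\<^sub>v f k \<in> carrier_vec n \<and> X *\<^sub>v (lam k \<cdot>\<^sub>v f k) = lam k \<cdot>\<^sub>v (lam k \<cdot>\<^sub>v f k)"
    using f X by (auto simp: mult_mat_vec)
  have "X *\<^sub>v v = vs n (\<lambda>k. X *\<^sub>v f k) (Suc d)" using vf f X by (auto intro: vs_mat)
  also have "\<dots> = vs n (\<lambda>k. lam k \<cdot>\<^sub>v f k) (Suc d)" using f by (intro vs_cong) auto
  finally have "E j *\<^sub>v (X *\<^sub>v v) = lam j \<cdot>\<^sub>v f j" using E_vs[OF g j] by simp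
  then show ?thesis using E_vs[OF f j] vf by simp
qed

lemma E_zero_all: assumes v: "v \<in> carrier_vec n" and z: "\<forall>j\<le>d. E j *\<^sub>v v = 0\<^sub>v n"
  shows "v = 0\<^sub>v n"
proof -
  have "v = vs n (\<lambda>j. E j *\<^sub>v v) (Suc d)" using E_sum[OF v] by simp
  also have "\<dots> = vs n (\<lambda>j. 0\<^sub>v n) (Suc d)" using z by (intro vs_cong) auto
  finally show ?thesis by (simp add: vs_zero)
qed

lemma mem_SS: assumes "set xs \<subseteq> {..d}"
  shows "v \<in> subspace_sum n (map (\<lambda>k. mat_image n (E k)) xs) \<longleftrightarrow>
     v \<in> carrier_vec n \<and> (\<forall>j\<le>d. j \<notin> set xs \<longrightarrow> E j *\<^sub>v v = 0\<^sub>v n)"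
  using assms
proof (induction xs arbitrary: v)
  case Nil
  then show ?case using E_zero_all by (auto simp: mult_zero_vec_right)
next
  case (Cons x xs)
  have x: "x \<le> d" and xs: "set xs \<subseteq> {..d}" using Cons.prems by auto
  show ?case
  proof
    assume "v \<in> subspace_sum n (map (\<lambda>k. mat_image n (E k)) (x # xs))"
    then obtain w u where v: "v = w + u" and w: "w \<in> mat_image n (E x)"
      and u: "u \<in> subspace_sum n (map (\<lambda>k. mat_image n (E k)) xs)" by auto
    obtain z where z: "z \<in> carrier_vec n" "w = E x *\<^sub>v z" using w unfolding mat_image_def by auto
    have u': "u \<in> carrier_vec n" "\<forall>j\<le>d. j \<notin> set xs \<longrightarrow> E j *\<^sub>v u = 0\<^sub>v n" using Cons.IH[OF xs] u by auto
    have wc: "w \<in> carrier_vec n" using z mult_mat_vec_carrier[OF E_carrier z(1)] by simp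
    show "v \<in> carrier_vec n \<and> (\<forall>j\<le>d. j \<notin> set (x # xs) \<longrightarrow> E j *\<^sub>v v = 0\<^sub>v n)"
    proof (intro conjI allI impI)
      show "v \<in> carrier_vec n" using v wc u' by simp
      fix j assume j: "j \<le> d" "j \<notin> set (x # xs)"
      have "E j *\<^sub>v v = E j *\<^sub>v w + E j *\<^sub>v u" using v wc u' by (simp add: mult_add_distrib_mat_vec[of _ n n])
      also have "\<dots> = 0\<^sub>v n" using j u' z E_E[OF z(1) j(1) x] by auto
      finally show "E j *\<^sub>v v = 0\<^sub>v n" .
    qed
  next
    assume H: "v \<in> carrier_vec n \<and> (\<forall>j\<le>d. j \<notin> set (x # xs) \<longrightarrow> E j *\<^sub>v v = 0\<^sub>v n)"
    let ?w = "E x *\<^sub>v v" and ?u = "v - E x *\<^sub>v v"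
    have vc: "v \<in> carrier_vec n" using H by simp
    have "?u \<in> subspace_sum n (map (\<lambda>k. mat_image n (E k)) xs)"
    proof (subst Cons.IH[OF xs], intro conjI allI impI)
      show "?u \<in> carrier_vec n" using vc by simp
      fix j assume j: "j \<le> d" "j \<notin> set xs"
      have "E j *\<^sub>v ?u = E j *\<^sub>v v - E j *\<^sub>v (E x *\<^sub>v v)" using vc by (simp add: mult_minus_distrib_mat_vec[of _ n n])
      also have "\<dots> = 0\<^sub>v n" using H j E_E[OF vc j(1) x] by (cases "j = x") auto
      finally show "E j *\<^sub>v ?u = 0\<^sub>v n" .
    qed
    moreover have "?w \<in> mat_image n (E x)" unfolding mat_image_def using vc by auto
    moreover have "v = ?w + ?u" using vc by (intro eq_vecI) auto
    ultimately show "v \<in> subspace_sum n (map (\<lambda>k. mat_image n (E k)) (x # xs))" by auto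
  qed
qed

end


lemma qpow_inj:
  fixes q :: "'a::field"
  assumes q0: "q \<noteq> 0" and qr: "\<forall>m::nat. m > 0 \<longrightarrow> q ^ m \<noteq> 1" and eq: "q powi a = q powi b"
  shows "a = b"
proof (rule ccontr)
  assume ne: "a \<noteq> b"
  have "q powi (a - b) = 1" using eq q0 by (simp add: power_int_diff)
  show False
  proof (cases "a > b")
    case True
    hence "q powi (a - b) = q ^ nat (a - b)" by (simp add: power_int_def)
    then show False using qr True \<open>q powi (a - b) = 1\<close> by (metis zero_less_nat_eq diff_gt_0_iff_gt)
  next
    case False
    hence "b - a > 0" using ne by simp
    have "q powi (b - a) = 1" using eq q0 by (simp add: power_int_diff)
    hence "q powi (b - a) = q ^ nat (b - a)" using \<open>b - a > 0\<close> by (simp add: power_int_def)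
    then show False using qr \<open>b - a > 0\<close> \<open>q powi (b - a) = 1\<close> by (metis zero_less_nat_eq)
  qed
qed

lemma diag_dec:
  fixes X :: "'a::field mat"
  assumes X: "X \<in> carrier_mat n n" and dg: "diagonalizable_mat X"
    and ev: "{k. eigenvalue X k} = lam ` {0..d}" and inj: "inj_on lam {0..d}"
    and v: "v \<in> carrier_vec n"
  shows "\<exists>f. (\<forall>k\<le>d. f k \<in> carrier_vec n \<and> X *\<^sub>v f k = lam k \<cdot>\<^sub>v f k) \<and> v = vs n f (Suc d)"
proof -
  obtain D P Q where D: "diagonal_mat D" and sim: "similar_mat_wit X D P Q"
    using dg unfolding diagonalizable_mat_def similar_mat_def by blast
  have car: "D \<in> carrier_mat n n" "P \<in> carrier_mat n n" "Q \<in> carrier_mat n n"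
    and PQ: "P * Q = 1\<^sub>m n" and QP: "Q * P = 1\<^sub>m n" and XD: "X = P * D * Q"
    using sim X unfolding similar_mat_wit_def Let_def by auto
  have Xv: "X *\<^sub>v x = P *\<^sub>v (D *\<^sub>v (Q *\<^sub>v x))" if "x \<in> carrier_vec n" for x
  proof -
    have "X *\<^sub>v x = (P * D * Q) *\<^sub>v x" using XD by simp
    also have "\<dots> = (P * D) *\<^sub>v (Q *\<^sub>v x)" by (rule assoc_mult_mat_vec) (use car that in auto)
    also have "\<dots> = P *\<^sub>v (D *\<^sub>v (Q *\<^sub>v x))" by (rule assoc_mult_mat_vec) (use car that in auto)
    finally show ?thesis .
  qed
  have QPv: "Q *\<^sub>v (P *\<^sub>v x) = x" if "x \<in> carrier_vec n" for x
  proof -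
    have "Q *\<^sub>v (P *\<^sub>v x) = (Q * P) *\<^sub>v x" using car that by simp
    then show ?thesis using QP that by simp
  qed
  have PQv: "P *\<^sub>v (Q *\<^sub>v x) = x" if "x \<in> carrier_vec n" for x
  proof -
    have "P *\<^sub>v (Q *\<^sub>v x) = (P * Q) *\<^sub>v x" using car that by simp
    then show ?thesis using PQ that by simp
  qed
  have Dv: "D *\<^sub>v w = vec n (\<lambda>m. D $$ (m,m) * w $ m)" if w: "w \<in> carrier_vec n" for w
  proof (rule eq_vecI)
    fix i assume "i < dim_vec (vec n (\<lambda>m. D $$ (m, m) * w $ m))"
    hence i: "i < n" by simp
    have "(D *\<^sub>v w) $ i = (\<Sum>l\<in>{0..<n}. D $$ (i,l) * w $ l)"
      using car i w by (simp add: scalar_prod_def row_def)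
    also have "\<dots> = (\<Sum>l\<in>{i}. D $$ (i,l) * w $ l)"
    proof (rule sum.mono_neutral_right)
      show "\<forall>l\<in>{0..<n} - {i}. D $$ (i, l) * w $ l = 0"
        using D car i unfolding diagonal_mat_def by auto
    qed (use i in auto)
    finally show "(D *\<^sub>v w) $ i = vec n (\<lambda>m. D $$ (m, m) * w $ m) $ i" using i by simp
  qed (use car in auto)
  have evm: "D $$ (m,m) \<in> lam ` {0..d}" if m: "m < n" for m
  proof -
    let ?e = "unit_vec n m"
    have ec: "?e \<in> carrier_vec n" by simp
    have "D *\<^sub>v ?e = D $$ (m,m) \<cdot>\<^sub>v ?e" using Dv[OF ec] m by (intro eq_vecI) auto
    hence "X *\<^sub>v (P *\<^sub>v ?e) = D $$ (m,m) \<cdot>\<^sub>v (P *\<^sub>v ?e)"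
      using Xv[of "P *\<^sub>v ?e"] QPv[OF ec] car by (simp add: mult_mat_vec)
    moreover have "P *\<^sub>v ?e \<noteq> 0\<^sub>v n"
    proof
      assume "P *\<^sub>v ?e = 0\<^sub>v n"
      hence "Q *\<^sub>v (P *\<^sub>v ?e) = 0\<^sub>v n" using car by (simp add: mult_zero_vec_right)
      thus False using QPv[OF ec] m by simp
    qed
    ultimately have "eigenvalue X (D $$ (m,m))"
      unfolding eigenvalue_def eigenvector_def using X car
      by (intro exI[of _ "P *\<^sub>v ?e"]) auto
    then show ?thesis using ev by auto
  qed
  define w where "w k = vec n (\<lambda>m. if D $$ (m,m) = lam k then (Q *\<^sub>v v) $ m else 0)" for k
  define f where "f k = P *\<^sub>v w k" for k
  have wc: "w k \<in> carrier_vec n" for k unfolding w_def by simp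
  show ?thesis
  proof (intro exI conjI allI impI)
    fix k assume k: "k \<le> d"
    show "f k \<in> carrier_vec n" unfolding f_def using car wc by simp
    have "D *\<^sub>v w k = lam k \<cdot>\<^sub>v w k" using Dv[OF wc] by (intro eq_vecI) (auto simp: w_def)
    then show "X *\<^sub>v f k = lam k \<cdot>\<^sub>v f k"
      unfolding f_def using Xv[of "P *\<^sub>v w k"] QPv[OF wc] car wc by (simp add: mult_mat_vec)
  next
    have "vs n w (Suc d) = Q *\<^sub>v v"
    proof (rule eq_vecI)
      fix i assume "i < dim_vec (Q *\<^sub>v v)"
      hence i: "i < n" using car by simp
      obtain k0 where k0: "k0 \<le> d" "D $$ (i,i) = lam k0" using evm[OF i] by auto
      have iff: "D $$ (i,i) = lam k \<longleftrightarrow> k = k0" if "k < Suc d" for k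
        using k0 that inj by (metis atLeastAtMost_iff inj_on_contraD less_Suc_eq_le zero_le)
      have "vs n w (Suc d) $ i = (\<Sum>k<Suc d. w k $ i)" using wc i by (simp add: vs_index)
      also have "\<dots> = (\<Sum>k<Suc d. if k = k0 then (Q *\<^sub>v v) $ i else 0)"
        using i iff by (intro sum.cong) (auto simp: w_def)
      also have "\<dots> = (Q *\<^sub>v v) $ i" using k0 by simp
      finally show "vs n w (Suc d) $ i = (Q *\<^sub>v v) $ i" .
    qed (use car vs_carrier[of "Suc d" w n] wc in auto)
    then have "vs n f (Suc d) = P *\<^sub>v (Q *\<^sub>v v)"
      unfolding f_def using car wc by (simp add: vs_mat[symmetric])
    then show "v = vs n f (Suc d)" using PQv[OF v] by simp
  qed
qed


lemma mzv[simp]: "dim_col M = n \<Longrightarrow> M *\<^sub>v 0\<^sub>v n = 0\<^sub>v (dim_row M)"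
  by (intro eq_vecI) (auto simp: scalar_prod_def)

lemma zmv[simp]: "dim_vec v = nc \<Longrightarrow> 0\<^sub>m nr nc *\<^sub>v v = 0\<^sub>v nr"
  by (intro eq_vecI) (auto simp: scalar_prod_def)

lemma smult_zero_v[simp]: "c \<cdot>\<^sub>v 0\<^sub>v n = (0\<^sub>v n :: 'a::field vec)"
  by (intro eq_vecI) auto

lemma uminus_zero_v[simp]: "- 0\<^sub>v n = (0\<^sub>v n :: 'a::field vec)"
  by (intro eq_vecI) auto

lemma minus_zero_v[simp]: "v \<in> carrier_vec n \<Longrightarrow> v - 0\<^sub>v n = (v :: 'a::field vec)"
  by (intro eq_vecI) auto

lemma zero_minus_v[simp]: "v \<in> carrier_vec n \<Longrightarrow> 0\<^sub>v n - v = - (v :: 'a::field vec)"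
  by (intro eq_vecI) auto

locale TDS =
  fixes n d :: nat and q t :: "'a::field" and A As K :: "'a mat" and th ths :: "nat \<Rightarrow> 'a"
  assumes th_def: "th = (\<lambda>i. q powi (2 * int i - int d))"
  and ths_def: "ths = (\<lambda>i. q powi (int d - 2 * int i))"
  and q0: "q \<noteq> 0" and qroot: "\<forall>m::nat. m > 0 \<longrightarrow> q ^ m \<noteq> 1"
  and TD: "tridiagonal_system n d A th As ths"
  and Kc: "K \<in> carrier_mat n n"
  and Khyp: "\<forall>i\<le>d. \<forall>u \<in> split_comp n d A th As ths i. K *\<^sub>v u = ths i \<cdot>\<^sub>v u"
begin

lemma Ac[simp]: "A \<in> carrier_mat n n" and Asc[simp]: "As \<in> carrier_mat n n"
  using TD unfolding tridiagonal_system_def by auto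

lemma A_vec[simp]: "u \<in> carrier_vec n \<Longrightarrow> A *\<^sub>v u \<in> carrier_vec n"
  and As_vec[simp]: "u \<in> carrier_vec n \<Longrightarrow> As *\<^sub>v u \<in> carrier_vec n"
  and K_vec[simp]: "u \<in> carrier_vec n \<Longrightarrow> K *\<^sub>v u \<in> carrier_vec n"
  using mult_mat_vec_carrier[OF Ac] mult_mat_vec_carrier[OF Asc] mult_mat_vec_carrier[OF Kc] by auto

lemma dims[simp]: "dim_row A = n" "dim_col A = n" "dim_row As = n" "dim_col As = n" "dim_row K = n" "dim_col K = n"
  using carrier_matD[OF Ac] carrier_matD[OF Asc] carrier_matD[OF Kc] by auto

lemma mat3_vec: "M1 \<in> carrier_mat n n \<Longrightarrow> M2 \<in> carrier_mat n n \<Longrightarrow> M3 \<in> carrier_mat n n \<Longrightarrow>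
  x \<in> carrier_vec n \<Longrightarrow> (M1 * M2 * M3) *\<^sub>v x = M1 *\<^sub>v (M2 *\<^sub>v (M3 *\<^sub>v x))"
  by (subst assoc_mult_mat_vec[of _ n n _ n]) (auto simp: assoc_mult_mat_vec[of _ n n _ n])

lemma th_inj: "inj_on th {0..d}" and ths_inj: "inj_on ths {0..d}"
  using TD unfolding tridiagonal_system_def by auto

lemma TDA_mat: "i \<le> d \<Longrightarrow> j \<le> d \<Longrightarrow> (i > j + 1 \<or> j > i + 1) \<Longrightarrow>
   prim_idem n d As ths i * A * prim_idem n d As ths j = 0\<^sub>m n n"
  and TDAs_mat: "i \<le> d \<Longrightarrow> j \<le> d \<Longrightarrow> (i > j + 1 \<or> j > i + 1) \<Longrightarrow>
   prim_idem n d A th i * As * prim_idem n d A th j = 0\<^sub>m n n"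
  using TD unfolding tridiagonal_system_def by auto

lemma irred: "is_subspace n W \<Longrightarrow> invariant_sub A W \<Longrightarrow> invariant_sub As W \<Longrightarrow> W = {0\<^sub>v n} \<or> W = carrier_vec n"
  using TD unfolding tridiagonal_system_def by auto

sublocale EA: edec n d A th
proof
  show "A \<in> carrier_mat n n" by simp
  show "inj_on th {0..d}" by (rule th_inj)
  fix v :: "'a vec" assume "v \<in> carrier_vec n"
  then show "\<exists>f. (\<forall>k\<le>d. f k \<in> carrier_vec n \<and> A *\<^sub>v f k = th k \<cdot>\<^sub>v f k) \<and> v = vs n f (Suc d)"
    using TD th_inj unfolding tridiagonal_system_def by (intro diag_dec) auto
qed

sublocale ES: edec n d As ths
proof
  show "As \<in> carrier_mat n n" by simp
  show "inj_on ths {0..d}" by (rule ths_inj)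
  fix v :: "'a vec" assume "v \<in> carrier_vec n"
  then show "\<exists>f. (\<forall>k\<le>d. f k \<in> carrier_vec n \<and> As *\<^sub>v f k = ths k \<cdot>\<^sub>v f k) \<and> v = vs n f (Suc d)"
    using TD ths_inj unfolding tridiagonal_system_def by (intro diag_dec) auto
qed

lemma TDA: assumes "i \<le> d" "j \<le> d" "i > j + 1 \<or> j > i + 1" "x \<in> carrier_vec n"
  shows "ES.E i *\<^sub>v (A *\<^sub>v (ES.E j *\<^sub>v x)) = 0\<^sub>v n"
proof -
  have "ES.E i *\<^sub>v (A *\<^sub>v (ES.E j *\<^sub>v x)) = (ES.E i * A * ES.E j) *\<^sub>v x"
    using assms by (simp add: mat3_vec)
  also have "\<dots> = 0\<^sub>v n" using TDA_mat[OF assms(1-3)] assms(4) by (simp add: mult_zero_vec_right)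
  finally show ?thesis .
qed

lemma TDAs: assumes "i \<le> d" "j \<le> d" "i > j + 1 \<or> j > i + 1" "x \<in> carrier_vec n"
  shows "EA.E i *\<^sub>v (As *\<^sub>v (EA.E j *\<^sub>v x)) = 0\<^sub>v n"
proof -
  have "EA.E i *\<^sub>v (As *\<^sub>v (EA.E j *\<^sub>v x)) = (EA.E i * As * EA.E j) *\<^sub>v x"
    using assms by (simp add: mat3_vec)
  also have "\<dots> = 0\<^sub>v n" using TDAs_mat[OF assms(1-3)] assms(4) by (simp add: mult_zero_vec_right)
  finally show ?thesis .
qed

definition Uc :: "nat \<Rightarrow> 'a vec set" where
  "Uc k = {u \<in> carrier_vec n. (\<forall>j\<le>d. k < j \<longrightarrow> ES.E j *\<^sub>v u = 0\<^sub>v n) \<and> (\<forall>j\<le>d. j < k \<longrightarrow> EA.E j *\<^sub>v u = 0\<^sub>v n)}"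

lemma split_eq: assumes k: "k \<le> d" shows "split_comp n d A th As ths k = Uc k"
proof -
  have h1: "set [0..<Suc k] \<subseteq> {..d}" "set [k..<Suc d] \<subseteq> {..d}" using k by auto
  show ?thesis unfolding split_comp_def Uc_def
    using ES.mem_SS[OF h1(1)] EA.mem_SS[OF h1(2)] k by (auto simp del: upt_Suc)
qed

lemma Uc_carrier: "u \<in> Uc k \<Longrightarrow> u \<in> carrier_vec n"
  unfolding Uc_def by auto

lemma Uc_top: "u \<in> Uc (Suc d) \<Longrightarrow> u = 0\<^sub>v n"
  unfolding Uc_def by (auto intro: EA.E_zero_all)

lemma Uc_zero: "0\<^sub>v n \<in> Uc k"
  unfolding Uc_def by (auto simp: mult_zero_vec_right)

lemma Uc_add: "u \<in> Uc k \<Longrightarrow> w \<in> Uc k \<Longrightarrow> u + w \<in> Uc k"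
  unfolding Uc_def by (auto simp: mult_add_distrib_mat_vec[of _ n n])

lemma Uc_smult: "u \<in> Uc k \<Longrightarrow> c \<cdot>\<^sub>v u \<in> Uc k"
  unfolding Uc_def by (auto simp: mult_mat_vec[of _ n n])

lemma ES_A_expand: assumes u: "u \<in> carrier_vec n"
  shows "ES.E j *\<^sub>v (A *\<^sub>v u) = vs n (\<lambda>m. ES.E j *\<^sub>v (A *\<^sub>v (ES.E m *\<^sub>v u))) (Suc d)"
proof -
  have "ES.E j *\<^sub>v (A *\<^sub>v u) = ES.E j *\<^sub>v (A *\<^sub>v vs n (\<lambda>m. ES.E m *\<^sub>v u) (Suc d))"
    using ES.E_sum[OF u] by simp
  also have "\<dots> = ES.E j *\<^sub>v vs n (\<lambda>m. A *\<^sub>v (ES.E m *\<^sub>v u)) (Suc d)"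
    using u by (subst vs_mat[of A n]) auto
  also have "\<dots> = vs n (\<lambda>m. ES.E j *\<^sub>v (A *\<^sub>v (ES.E m *\<^sub>v u))) (Suc d)"
    using u by (subst vs_mat[of _ n]) auto
  finally show ?thesis .
qed

lemma EA_As_expand: assumes u: "u \<in> carrier_vec n"
  shows "EA.E j *\<^sub>v (As *\<^sub>v u) = vs n (\<lambda>m. EA.E j *\<^sub>v (As *\<^sub>v (EA.E m *\<^sub>v u))) (Suc d)"
proof -
  have "EA.E j *\<^sub>v (As *\<^sub>v u) = EA.E j *\<^sub>v (As *\<^sub>v vs n (\<lambda>m. EA.E m *\<^sub>v u) (Suc d))"
    using EA.E_sum[OF u] by simp
  also have "\<dots> = EA.E j *\<^sub>v vs n (\<lambda>m. As *\<^sub>v (EA.E m *\<^sub>v u)) (Suc d)"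
    using u by (subst vs_mat[of As n]) auto
  also have "\<dots> = vs n (\<lambda>m. EA.E j *\<^sub>v (As *\<^sub>v (EA.E m *\<^sub>v u))) (Suc d)"
    using u by (subst vs_mat[of _ n]) auto
  finally show ?thesis .
qed

lemma A_Uc: assumes u: "u \<in> Uc k" and k: "k \<le> d"
  shows "A *\<^sub>v u - th k \<cdot>\<^sub>v u \<in> Uc (Suc k)"
proof -
  have uc: "u \<in> carrier_vec n" using u Uc_carrier by blast
  have uE: "\<And>j. j \<le> d \<Longrightarrow> k < j \<Longrightarrow> ES.E j *\<^sub>v u = 0\<^sub>v n" "\<And>j. j \<le> d \<Longrightarrow> j < k \<Longrightarrow> EA.E j *\<^sub>v u = 0\<^sub>v n"
    using u unfolding Uc_def by auto
  let ?r = "A *\<^sub>v u - th k \<cdot>\<^sub>v u"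
  have rc: "?r \<in> carrier_vec n" using uc by simp
  have "ES.E j *\<^sub>v ?r = 0\<^sub>v n" if j: "j \<le> d" "Suc k < j" for j
  proof -
    have "ES.E j *\<^sub>v (A *\<^sub>v u) = vs n (\<lambda>m. 0\<^sub>v n) (Suc d)"
      unfolding ES_A_expand[OF uc]
    proof (rule vs_cong)
      fix m assume m: "m < Suc d"
      show "ES.E j *\<^sub>v (A *\<^sub>v (ES.E m *\<^sub>v u)) = 0\<^sub>v n"
      proof (cases "m \<le> k")
        case True then show ?thesis using TDA[of j m u] j m uc by auto
      next
        case False then show ?thesis using uE(1)[of m] m by (simp add: mult_zero_vec_right)
      qed
    qed
    then show ?thesis using uE(1)[of j] j uc by (simp add: mult_minus_distrib_mat_vec[of _ n n] mult_mat_vec[of _ n n] vs_zero)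
  qed
  moreover have "EA.E j *\<^sub>v ?r = 0\<^sub>v n" if j: "j \<le> d" "j < Suc k" for j
  proof -
    have "EA.E j *\<^sub>v ?r = th j \<cdot>\<^sub>v (EA.E j *\<^sub>v u) - th k \<cdot>\<^sub>v (EA.E j *\<^sub>v u)"
      using uc j by (simp add: mult_minus_distrib_mat_vec[of _ n n] mult_mat_vec[of _ n n] EA.E_X)
    then show ?thesis using j uE(2)[of j] uc by (cases "j = k") auto
  qed
  ultimately show ?thesis unfolding Uc_def using rc by auto
qed

lemma As_Uc: assumes u: "u \<in> Uc k" and k: "k \<le> d"
  shows "As *\<^sub>v u - ths k \<cdot>\<^sub>v u \<in> Uc (k - 1)" and "k = 0 \<Longrightarrow> As *\<^sub>v u - ths k \<cdot>\<^sub>v u = 0\<^sub>v n"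
proof -
  have uc: "u \<in> carrier_vec n" using u Uc_carrier by blast
  have uE: "\<And>j. j \<le> d \<Longrightarrow> k < j \<Longrightarrow> ES.E j *\<^sub>v u = 0\<^sub>v n" "\<And>j. j \<le> d \<Longrightarrow> j < k \<Longrightarrow> EA.E j *\<^sub>v u = 0\<^sub>v n"
    using u unfolding Uc_def by auto
  let ?r = "As *\<^sub>v u - ths k \<cdot>\<^sub>v u"
  have rc: "?r \<in> carrier_vec n" using uc by simp
  have R1: "ES.E j *\<^sub>v ?r = 0\<^sub>v n" if j: "j \<le> d" "k \<le> j" for j
  proof -
    have "ES.E j *\<^sub>v ?r = ths j \<cdot>\<^sub>v (ES.E j *\<^sub>v u) - ths k \<cdot>\<^sub>v (ES.E j *\<^sub>v u)"
      using uc j by (simp add: mult_minus_distrib_mat_vec[of _ n n] mult_mat_vec[of _ n n] ES.E_X)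
    then show ?thesis using j uE(1)[of j] uc by (cases "j = k") auto
  qed
  have R2: "EA.E j *\<^sub>v ?r = 0\<^sub>v n" if j: "j \<le> d" "j + 1 < k" for j
  proof -
    have "EA.E j *\<^sub>v (As *\<^sub>v u) = vs n (\<lambda>m. 0\<^sub>v n) (Suc d)"
      unfolding EA_As_expand[OF uc]
    proof (rule vs_cong)
      fix m assume m: "m < Suc d"
      show "EA.E j *\<^sub>v (As *\<^sub>v (EA.E m *\<^sub>v u)) = 0\<^sub>v n"
      proof (cases "k \<le> m")
        case True then show ?thesis using TDAs[of j m u] j m uc by auto
      next
        case False then show ?thesis using uE(2)[of m] m by (simp add: mult_zero_vec_right)
      qed
    qed
    then show ?thesis using uE(2)[of j] j uc by (simp add: mult_minus_distrib_mat_vec[of _ n n] mult_mat_vec[of _ n n] vs_zero)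
  qed
  show "?r \<in> Uc (k - 1)" unfolding Uc_def using rc R1 R2 by auto
  show "k = 0 \<Longrightarrow> ?r = 0\<^sub>v n" using R1 rc by (intro ES.E_zero_all) auto
qed

end


lemma smult_zero_cancel: fixes y :: "'a::field vec"
  assumes "c \<noteq> 0" "c \<cdot>\<^sub>v y = 0\<^sub>v n" "y \<in> carrier_vec n" shows "y = 0\<^sub>v n"
proof -
  have "inverse c \<cdot>\<^sub>v (c \<cdot>\<^sub>v y) = y" using assms(1) by (simp add: smult_smult_assoc)
  then show ?thesis using assms(2) by simp
qed

context TDS begin

lemma powi_mult: "q powi a * q powi b = q powi (a + b)"
  using q0 by (simp add: power_int_add)

lemma th_ths: "th k * ths k = 1"
  unfolding th_def ths_def by (simp add: powi_mult)

lemma q2_ths: "q^2 * ths (Suc k) = ths k"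
proof -
  have "q^2 * ths (Suc k) = q powi 2 * q powi (int d - 2 * int (Suc k))" unfolding ths_def by simp
  also have "\<dots> = q powi (2 + (int d - 2 * int (Suc k)))" by (rule powi_mult)
  also have "2 + (int d - 2 * int (Suc k)) = int d - 2 * int k" by simp
  finally show ?thesis unfolding ths_def by simp
qed

lemma q2_th: "q^2 * th k = th (Suc k)"
proof -
  have "q^2 * th k = q powi 2 * q powi (2 * int k - int d)" unfolding th_def by simp
  also have "\<dots> = q powi (2 + (2 * int k - int d))" by (rule powi_mult)
  also have "2 + (2 * int k - int d) = 2 * int (Suc k) - int d" by simp
  finally show ?thesis unfolding th_def by simp
qed

definition W :: "'a vec set" where "W = {vs n g (Suc d) | g. \<forall>k\<le>d. g k \<in> Uc k}"

lemma W_carrier: "w \<in> W \<Longrightarrow> w \<in> carrier_vec n"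
  unfolding W_def by (auto intro!: vs_carrier simp: Uc_carrier less_Suc_eq_le)

lemma W_zero: "0\<^sub>v n \<in> W"
  unfolding W_def using Uc_zero by (auto intro!: exI[of _ "\<lambda>k. 0\<^sub>v n"] simp: vs_zero)

lemma W_add: assumes "u \<in> W" "w \<in> W" shows "u + w \<in> W"
proof -
  obtain g h where g: "\<forall>k\<le>d. g k \<in> Uc k" "u = vs n g (Suc d)" and h: "\<forall>k\<le>d. h k \<in> Uc k" "w = vs n h (Suc d)"
    using assms unfolding W_def by auto
  have "u + w = vs n (\<lambda>k. g k + h k) (Suc d)"
    using g h by (subst vs_add) (auto simp: Uc_carrier less_Suc_eq_le)
  moreover have "\<forall>k\<le>d. g k + h k \<in> Uc k" using g h Uc_add by auto
  ultimately show ?thesis unfolding W_def by blast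
qed

lemma W_smult: assumes "u \<in> W" shows "c \<cdot>\<^sub>v u \<in> W"
proof -
  obtain g where g: "\<forall>k\<le>d. g k \<in> Uc k" "u = vs n g (Suc d)"
    using assms unfolding W_def by auto
  have "c \<cdot>\<^sub>v u = vs n (\<lambda>k. c \<cdot>\<^sub>v g k) (Suc d)"
    using g by (subst vs_smult) (auto simp: Uc_carrier less_Suc_eq_le)
  moreover have "\<forall>k\<le>d. c \<cdot>\<^sub>v g k \<in> Uc k" using g Uc_smult by auto
  ultimately show ?thesis unfolding W_def by blast
qed

lemma W_single: assumes u: "u \<in> Uc k" and k: "k \<le> Suc d" shows "u \<in> W"
proof (cases "k = Suc d")
  case True then show ?thesis using Uc_top u W_zero by simp
next
  case False
  hence k': "k \<le> d" using k by simp
  let ?g = "\<lambda>j. if j = k then u else 0\<^sub>v n"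
  have g: "\<forall>j\<le>d. ?g j \<in> Uc j"
  proof (intro allI impI)
    fix j show "?g j \<in> Uc j" by (cases "j = k") (simp_all add: u Uc_zero)
  qed
  have "vs n ?g (Suc d) = u" using vs_delta[OF Uc_carrier[OF u], of k "Suc d"] k' by simp
  hence "u = vs n ?g (Suc d)" by simp
  then show ?thesis unfolding W_def using g by blast
qed

lemma W_vs: "(\<And>k. k < m \<Longrightarrow> h k \<in> W) \<Longrightarrow> vs n h m \<in> W"
  by (induction m) (auto simp: vs.simps W_zero W_add)

lemma W_inv: assumes M: "M \<in> carrier_mat n n" and H: "\<And>k u. k \<le> d \<Longrightarrow> u \<in> Uc k \<Longrightarrow> M *\<^sub>v u \<in> W"
  and w: "w \<in> W" shows "M *\<^sub>v w \<in> W"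
proof -
  obtain g where g: "\<forall>k\<le>d. g k \<in> Uc k" "w = vs n g (Suc d)"
    using w unfolding W_def by auto
  have "M *\<^sub>v vs n g (Suc d) = vs n (\<lambda>k. M *\<^sub>v g k) (Suc d)"
    by (rule vs_mat[OF M]) (use g in \<open>auto simp: Uc_carrier less_Suc_eq_le\<close>)
  hence "M *\<^sub>v w = vs n (\<lambda>k. M *\<^sub>v g k) (Suc d)" using g by simp
  also have "\<dots> \<in> W" using g H by (intro W_vs) (auto simp: less_Suc_eq_le)
  finally show ?thesis .
qed

lemma A_split: "u \<in> carrier_vec n \<Longrightarrow> A *\<^sub>v u = c \<cdot>\<^sub>v u + (A *\<^sub>v u - c \<cdot>\<^sub>v u)"
  and As_split: "u \<in> carrier_vec n \<Longrightarrow> As *\<^sub>v u = c \<cdot>\<^sub>v u + (As *\<^sub>v u - c \<cdot>\<^sub>v u)"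
  by (intro eq_vecI; simp)+

lemma A_W: assumes "k \<le> d" "u \<in> Uc k" shows "A *\<^sub>v u \<in> W"
proof -
  have "th k \<cdot>\<^sub>v u + (A *\<^sub>v u - th k \<cdot>\<^sub>v u) \<in> W"
    using assms A_Uc[OF assms(2,1)] by (intro W_add W_smult W_single[of _ "Suc k"] W_single[of _ k]) auto
  then show ?thesis using A_split[of u "th k"] assms Uc_carrier by simp
qed

lemma As_W: assumes "k \<le> d" "u \<in> Uc k" shows "As *\<^sub>v u \<in> W"
proof -
  have "ths k \<cdot>\<^sub>v u + (As *\<^sub>v u - ths k \<cdot>\<^sub>v u) \<in> W"
    using assms As_Uc(1)[OF assms(2,1)] by (intro W_add W_smult W_single[of _ "k - 1"] W_single[of _ k]) auto
  then show ?thesis using As_split[of u "ths k"] assms Uc_carrier by simp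
qed

lemma W_all: "W = carrier_vec n"
proof -
  have sub: "is_subspace n W" unfolding is_subspace_def
    using W_carrier W_zero W_add W_smult by blast
  have iA: "invariant_sub A W" unfolding invariant_sub_def
  proof
    fix w assume w: "w \<in> W"
    show "A *\<^sub>v w \<in> W"
    proof (rule W_inv[OF Ac _ w])
      fix k u assume "k \<le> d" "u \<in> Uc k" then show "A *\<^sub>v u \<in> W" by (rule A_W)
    qed
  qed
  have iAs: "invariant_sub As W" unfolding invariant_sub_def
  proof
    fix w assume w: "w \<in> W"
    show "As *\<^sub>v w \<in> W"
    proof (rule W_inv[OF Asc _ w])
      fix k u assume "k \<le> d" "u \<in> Uc k" then show "As *\<^sub>v u \<in> W" by (rule As_W)
    qed
  qed
  have "ths 0 \<in> {k. eigenvalue As k}" using TD unfolding tridiagonal_system_def by auto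
  then obtain x where x: "x \<in> carrier_vec n" "x \<noteq> 0\<^sub>v n" "As *\<^sub>v x = ths 0 \<cdot>\<^sub>v x"
    unfolding eigenvalue_def eigenvector_def by auto
  have "x \<in> Uc 0" unfolding Uc_def using x ES.E_eig[OF x(1) x(3)] by auto
  hence "x \<in> W" by (intro W_single) auto
  hence "W \<noteq> {0\<^sub>v n}" using x by auto
  then show ?thesis using irred[OF sub iA iAs] by auto
qed

lemma span: assumes "v \<in> carrier_vec n" shows "\<exists>g. (\<forall>k\<le>d. g k \<in> Uc k) \<and> v = vs n g (Suc d)"
proof -
  have "v \<in> W" using W_all assms by simp
  then show ?thesis unfolding W_def by blast
qed

lemma agree: assumes M: "M \<in> carrier_mat n n" and N: "N \<in> carrier_mat n n"
  and H: "\<And>k u. k \<le> d \<Longrightarrow> u \<in> Uc k \<Longrightarrow> M *\<^sub>v u = N *\<^sub>v u"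
  shows "M = N"
proof (rule mat_eq_vecI[OF M N])
  fix v :: "'a vec" assume v: "v \<in> carrier_vec n"
  obtain g where g: "\<forall>k\<le>d. g k \<in> Uc k" "v = vs n g (Suc d)" using span[OF v] by auto
  have gc: "\<And>k. k < Suc d \<Longrightarrow> g k \<in> carrier_vec n" using g Uc_carrier by (auto simp: less_Suc_eq_le)
  have "M *\<^sub>v v = vs n (\<lambda>k. M *\<^sub>v g k) (Suc d)" using g(2) gc M by (simp add: vs_mat[of M n])
  also have "\<dots> = vs n (\<lambda>k. N *\<^sub>v g k) (Suc d)" using g H by (intro vs_cong) (auto simp: less_Suc_eq_le)
  also have "\<dots> = N *\<^sub>v v" using g(2) gc N by (simp add: vs_mat[of N n])
  finally show "M *\<^sub>v v = N *\<^sub>v v" .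
qed

end


fun msum :: "nat \<Rightarrow> (nat \<Rightarrow> 'a::field mat) \<Rightarrow> nat \<Rightarrow> 'a mat" where
  "msum n F 0 = 0\<^sub>m n n"
| "msum n F (Suc m) = msum n F m + F m"

lemma msum_carrier: "(\<And>k. k < m \<Longrightarrow> F k \<in> carrier_mat n n) \<Longrightarrow> msum n F m \<in> carrier_mat n n"
  by (induction m) auto

lemma msum_vec: assumes "\<And>k. k < m \<Longrightarrow> F k \<in> carrier_mat n n" "v \<in> carrier_vec n"
  shows "msum n F m *\<^sub>v v = vs n (\<lambda>k. F k *\<^sub>v v) m"
  using assms(1) proof (induction m)
  case 0 then show ?case using assms(2) by simp
next
  case (Suc m)
  have c: "msum n F m \<in> carrier_mat n n" "F m \<in> carrier_mat n n" using Suc.prems by (auto intro: msum_carrier)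
  have "msum n F (Suc m) *\<^sub>v v = msum n F m *\<^sub>v v + F m *\<^sub>v v"
    using c assms(2) by (simp add: add_mult_distrib_mat_vec[of _ n n])
  then show ?case using Suc by (simp add: vs.simps)
qed

lemma sc_rel1: fixes x y z q2 a b :: "'a::field"
  assumes h1: "x * y = 1" and h2: "q2 * z = y"
  shows "q2 * (x * (y * a) + z * b) - y * (x * a + b) = (q2 - 1) * a"
proof -
  have "q2 * (x * (y * a) + z * b) - y * (x * a + b) = q2 * (x * y) * a + (q2 * z) * b - (x * y) * a - y * b"
    by (simp add: algebra_simps)
  also have "\<dots> = (q2 - 1) * a" unfolding h1 h2 by (simp add: algebra_simps)
  finally show ?thesis .
qed

context TDS begin

lemma K_Uc: assumes u: "u \<in> Uc k" and k: "k \<le> Suc d" shows "K *\<^sub>v u = ths k \<cdot>\<^sub>v u"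
proof (cases "k = Suc d")
  case True then show ?thesis using Uc_top[of u] u by simp
next
  case False
  hence k': "k \<le> d" using k by simp
  have "u \<in> split_comp n d A th As ths k" using split_eq[OF k'] u by simp
  then show ?thesis using Khyp k' by blast
qed

sublocale EK: edec n d K ths
proof
  show "K \<in> carrier_mat n n" by (rule Kc)
  show "inj_on ths {0..d}" by (rule ths_inj)
  fix v :: "'a vec" assume "v \<in> carrier_vec n"
  then obtain g where g: "\<forall>k\<le>d. g k \<in> Uc k" "v = vs n g (Suc d)" using span by blast
  then show "\<exists>f. (\<forall>k\<le>d. f k \<in> carrier_vec n \<and> K *\<^sub>v f k = ths k \<cdot>\<^sub>v f k) \<and> v = vs n f (Suc d)"
  proof (intro exI[of _ g] conjI allI impI)
    fix k assume k: "k \<le> d"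
    show "g k \<in> carrier_vec n" using g k Uc_carrier by blast
    show "K *\<^sub>v g k = ths k \<cdot>\<^sub>v g k" using g k K_Uc by simp
  qed (use g in simp)
qed

lemma EK_Uc: assumes u: "u \<in> Uc k" and k: "k \<le> d" and j: "j \<le> d"
  shows "EK.E j *\<^sub>v u = (if j = k then u else 0\<^sub>v n)"
  using EK.E_eig[OF Uc_carrier[OF u] K_Uc[OF u] k j] k by simp


lemma Kc'[simp]: "K \<in> carrier_mat n n" by (rule Kc)

abbreviation "Bs \<equiv> t \<cdot>\<^sub>m As + (1 - t) \<cdot>\<^sub>m K"

lemma Bs_carrier[simp]: "Bs \<in> carrier_mat n n" using Kc by simp

lemma Bs_vec: "v \<in> carrier_vec n \<Longrightarrow> Bs *\<^sub>v v = t \<cdot>\<^sub>v (As *\<^sub>v v) + (1 - t) \<cdot>\<^sub>v (K *\<^sub>v v)"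
  using Kc by (simp add: add_mult_distrib_mat_vec[of _ n n] smult_mat_mult_vec[of _ n n])

lemma M1_car: "q^2 \<cdot>\<^sub>m (K * A) - A * K \<in> carrier_mat n n"
  using Kc by (intro minus_carrier_mat) auto

lemma M1_vec: assumes x: "x \<in> carrier_vec n"
  shows "(q^2 \<cdot>\<^sub>m (K * A) - A * K) *\<^sub>v x = q^2 \<cdot>\<^sub>v (K *\<^sub>v (A *\<^sub>v x)) - A *\<^sub>v (K *\<^sub>v x)"
proof -
  have c: "q^2 \<cdot>\<^sub>m (K * A) \<in> carrier_mat n n" "A * K \<in> carrier_mat n n" using Kc by auto
  have "(q^2 \<cdot>\<^sub>m (K * A) - A * K) *\<^sub>v x = (q^2 \<cdot>\<^sub>m (K * A)) *\<^sub>v x - (A * K) *\<^sub>v x"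
    by (rule minus_mult_distrib_mat_vec[OF c x])
  also have "(q^2 \<cdot>\<^sub>m (K * A)) *\<^sub>v x = q^2 \<cdot>\<^sub>v ((K * A) *\<^sub>v x)"
    by (rule smult_mat_mult_vec[OF _ x]) (use Kc in auto)
  also have "(K * A) *\<^sub>v x = K *\<^sub>v (A *\<^sub>v x)" by (rule assoc_mult_mat_vec[OF Kc Ac x])
  also have "(A * K) *\<^sub>v x = A *\<^sub>v (K *\<^sub>v x)" by (rule assoc_mult_mat_vec[OF Ac Kc x])
  finally show ?thesis .
qed

lemma Bs_vec_carrier[simp]: "v \<in> carrier_vec n \<Longrightarrow> Bs *\<^sub>v v \<in> carrier_vec n"
  by (rule mult_mat_vec_carrier[OF Bs_carrier])

lemma rel1: "q^2 \<cdot>\<^sub>m (K * A) - A * K = (q^2 - 1) \<cdot>\<^sub>m 1\<^sub>m n"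
proof (rule agree)
  show "q^2 \<cdot>\<^sub>m (K * A) - A * K \<in> carrier_mat n n" by (rule M1_car)
  show "(q^2 - 1) \<cdot>\<^sub>m 1\<^sub>m n \<in> carrier_mat n n" by simp
  fix k u assume k: "k \<le> d" and u: "u \<in> Uc k"
  have uc: "u \<in> carrier_vec n" using u Uc_carrier by blast
  let ?r = "A *\<^sub>v u - th k \<cdot>\<^sub>v u"
  have r: "?r \<in> Uc (Suc k)" using A_Uc[OF u k] .
  have rc: "?r \<in> carrier_vec n" using uc by simp
  have Au: "A *\<^sub>v u = th k \<cdot>\<^sub>v u + ?r" using A_split[OF uc] .
  have Ku: "K *\<^sub>v u = ths k \<cdot>\<^sub>v u" using K_Uc[OF u] k by simp
  have Kr: "K *\<^sub>v ?r = ths (Suc k) \<cdot>\<^sub>v ?r" using K_Uc[OF r] k by simp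
  have "(q^2 \<cdot>\<^sub>m (K * A) - A * K) *\<^sub>v u = q^2 \<cdot>\<^sub>v (K *\<^sub>v (A *\<^sub>v u)) - A *\<^sub>v (K *\<^sub>v u)"
    by (rule M1_vec[OF uc])
  also have "K *\<^sub>v (A *\<^sub>v u) = th k \<cdot>\<^sub>v (ths k \<cdot>\<^sub>v u) + ths (Suc k) \<cdot>\<^sub>v ?r"
    using Kc uc Ku Kr by (subst Au) (simp add: mult_add_distrib_mat_vec[of _ n n] mult_mat_vec[of _ n n])
  also have "A *\<^sub>v (K *\<^sub>v u) = ths k \<cdot>\<^sub>v (th k \<cdot>\<^sub>v u + ?r)"
    using uc Ku Au by (simp add: mult_mat_vec[of _ n n])
  also have "q^2 \<cdot>\<^sub>v (th k \<cdot>\<^sub>v (ths k \<cdot>\<^sub>v u) + ths (Suc k) \<cdot>\<^sub>v ?r) - ths k \<cdot>\<^sub>v (th k \<cdot>\<^sub>v u + ?r)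
      = (q^2 - 1) \<cdot>\<^sub>v u"
  proof (rule eq_vecI)
    fix i assume "i < dim_vec ((q^2 - 1) \<cdot>\<^sub>v u)"
    hence i: "i < n" using uc by simp
    have "(q^2 \<cdot>\<^sub>v (th k \<cdot>\<^sub>v (ths k \<cdot>\<^sub>v u) + ths (Suc k) \<cdot>\<^sub>v ?r) - ths k \<cdot>\<^sub>v (th k \<cdot>\<^sub>v u + ?r)) $ i
      = q^2 * (th k * (ths k * u $ i) + ths (Suc k) * ?r $ i) - ths k * (th k * u $ i + ?r $ i)"
      using i uc rc by simp
    also have "\<dots> = (q^2 - 1) * u $ i" by (rule sc_rel1[OF th_ths q2_ths])
    finally show "(q^2 \<cdot>\<^sub>v (th k \<cdot>\<^sub>v (ths k \<cdot>\<^sub>v u) + ths (Suc k) \<cdot>\<^sub>v ?r) - ths k \<cdot>\<^sub>v (th k \<cdot>\<^sub>v u + ?r)) $ i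
      = ((q^2 - 1) \<cdot>\<^sub>v u) $ i" using i uc by simp
  qed (use uc rc in simp)
  also have "\<dots> = ((q^2 - 1) \<cdot>\<^sub>m 1\<^sub>m n) *\<^sub>v u" using uc by (simp add: smult_mat_mult_vec[of _ n n])
  finally show "(q^2 \<cdot>\<^sub>m (K * A) - A * K) *\<^sub>v u = ((q^2 - 1) \<cdot>\<^sub>m 1\<^sub>m n) *\<^sub>v u" .
qed

lemma part1_zero:
  assumes i: "i \<le> d" and w: "w \<in> carrier_vec n" and j: "j \<le> d" "j + 1 < i \<or> j > i + 1"
  shows "EA.E j *\<^sub>v (Bs *\<^sub>v (EA.E i *\<^sub>v w)) = 0\<^sub>v n"
proof -
  have "j \<noteq> i" using j by auto
  let ?x = "EA.E i *\<^sub>v w"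
  have xc: "?x \<in> carrier_vec n" using w by simp
  let ?y = "EA.E j *\<^sub>v (K *\<^sub>v ?x)"
  have yc: "?y \<in> carrier_vec n" using xc by simp
  have Ax: "A *\<^sub>v ?x = th i \<cdot>\<^sub>v ?x" using EA.E_comp[OF w i] .
  have "(q^2 \<cdot>\<^sub>m (K * A) - A * K) *\<^sub>v ?x = q^2 \<cdot>\<^sub>v (K *\<^sub>v (A *\<^sub>v ?x)) - A *\<^sub>v (K *\<^sub>v ?x)"
    by (rule M1_vec[OF xc])
  hence "EA.E j *\<^sub>v ((q^2 \<cdot>\<^sub>m (K * A) - A * K) *\<^sub>v ?x) = (q^2 * th i) \<cdot>\<^sub>v ?y - th j \<cdot>\<^sub>v ?y"
    using xc j Ax by (simp add: mult_minus_distrib_mat_vec[of _ n n] mult_mat_vec[of _ n n] EA.E_X smult_smult_assoc)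
  moreover have "EA.E j *\<^sub>v ((q^2 \<cdot>\<^sub>m (K * A) - A * K) *\<^sub>v ?x) = 0\<^sub>v n"
    unfolding rel1 using xc j i EA.E_E[OF w j(1) i] \<open>j \<noteq> i\<close> by (simp add: smult_mat_mult_vec[of _ n n] mult_mat_vec[of _ n n])
  moreover have "(q^2 * th i - th j) \<cdot>\<^sub>v ?y = (q^2 * th i) \<cdot>\<^sub>v ?y - th j \<cdot>\<^sub>v ?y"
    using yc by (intro eq_vecI) (auto simp: algebra_simps)
  ultimately have "(q^2 * th i - th j) \<cdot>\<^sub>v ?y = 0\<^sub>v n" by simp
  moreover have "q^2 * th i - th j \<noteq> 0"
  proof
    assume "q^2 * th i - th j = 0"
    hence "th (Suc i) = th j" using q2_th by simp
    hence "2 * int (Suc i) - int d = 2 * int j - int d" unfolding th_def using qpow_inj[OF q0 qroot] by blast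
    thus False using j by simp
  qed
  ultimately have y0: "?y = 0\<^sub>v n" using smult_zero_cancel yc by blast
  have "EA.E j *\<^sub>v (Bs *\<^sub>v ?x) = t \<cdot>\<^sub>v (EA.E j *\<^sub>v (As *\<^sub>v ?x)) + (1 - t) \<cdot>\<^sub>v ?y"
    using xc by (simp add: Bs_vec mult_add_distrib_mat_vec[of _ n n] mult_mat_vec[of _ n n])
  also have "EA.E j *\<^sub>v (As *\<^sub>v ?x) = 0\<^sub>v n" using TDAs[OF j(1) i _ w] j by auto
  finally show ?thesis using y0 by simp
qed

lemma part1: assumes i: "i \<le> d"
  shows "map_image Bs (mat_image n (EA.E i)) \<subseteq> nbr_sum n d A th i"
proof
  fix z assume "z \<in> map_image Bs (mat_image n (EA.E i))"
  then obtain w where w: "w \<in> carrier_vec n" and z: "z = Bs *\<^sub>v (EA.E i *\<^sub>v w)"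
    unfolding map_image_def mat_image_def by auto
  have set: "set (filter (\<lambda>k. i \<le> k + 1 \<and> k \<le> i + 1) [0..<Suc d]) \<subseteq> {..d}" by auto
  show "z \<in> nbr_sum n d A th i"
    unfolding nbr_sum_def EA.mem_SS[OF set]
  proof (intro conjI allI impI)
    show "z \<in> carrier_vec n" using z w by simp
    fix j assume "j \<le> d" "j \<notin> set (filter (\<lambda>k. i \<le> k + 1 \<and> k \<le> i + 1) [0..<Suc d])"
    hence j: "j \<le> d" "j + 1 < i \<or> j > i + 1" by (auto simp del: upt_Suc)
    show "EA.E j *\<^sub>v z = 0\<^sub>v n" using part1_zero[OF i w j] z by simp
  qed
qed

end


lemma sc_rel2: fixes x y z q2 a b :: "'a::field"
  assumes h1: "x * y = 1" and h2: "(q2 * z - x) * b = 0"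
  shows "x * (y * a + b) - q2 * (y * (x * a) + z * b) = (1 - q2) * a"
proof -
  have "x * (y * a + b) - q2 * (y * (x * a) + z * b) = (x * y) * a - q2 * (x * y) * a - (q2 * z - x) * b"
    by (simp add: algebra_simps)
  also have "\<dots> = (1 - q2) * a" unfolding h1 h2 by (simp add: algebra_simps)
  finally show ?thesis .
qed

lemma sc3: fixes p p' t s a b :: "'a::field"
  assumes h: "(p * t - p') * b = 0"
  shows "p * (t * (s * a + b) + (1 - t) * (s * a)) = s * (p * a) + p' * b"
proof -
  have "p * (t * (s * a + b) + (1 - t) * (s * a)) = s * (p * a) + p' * b + (p * t - p') * b"
    by (simp add: algebra_simps)
  then show ?thesis unfolding h by simp
qed

lemma sc4: fixes p T t h a b :: "'a::field"
  assumes h1: "p * T = 1"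
  shows "p * (h * (T * a) + (T * t) * b) = (1 - t) * (h * a) + t * (h * a + b)"
proof -
  have "p * (h * (T * a) + (T * t) * b) = (p * T) * (h * a) + (p * T) * (t * b)" by (simp add: algebra_simps)
  then show ?thesis unfolding h1 by (simp add: algebra_simps)
qed

context TDS begin

definition Dm :: "(nat \<Rightarrow> 'a) \<Rightarrow> 'a mat" where "Dm c = msum n (\<lambda>k. c k \<cdot>\<^sub>m EK.E k) (Suc d)"

lemma Dm_carrier[simp]: "Dm c \<in> carrier_mat n n"
  unfolding Dm_def by (rule msum_carrier) simp

lemma Dm_dim[simp]: "dim_row (Dm c) = n" "dim_col (Dm c) = n"
  using carrier_matD[OF Dm_carrier] by auto

lemma Dm_vec_carrier[simp]: "v \<in> carrier_vec n \<Longrightarrow> Dm c *\<^sub>v v \<in> carrier_vec n"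
  by (rule mult_mat_vec_carrier[OF Dm_carrier])

lemma Dm_Uc: assumes u: "u \<in> Uc k" and k: "k \<le> Suc d" shows "Dm c *\<^sub>v u = c k \<cdot>\<^sub>v u"
proof (cases "k = Suc d")
  case True
  then have "u = 0\<^sub>v n" using Uc_top u by simp
  then show ?thesis by simp
next
  case False
  hence k': "k \<le> d" using k by simp
  have uc: "u \<in> carrier_vec n" using u Uc_carrier by blast
  have "Dm c *\<^sub>v u = vs n (\<lambda>j. (c j \<cdot>\<^sub>m EK.E j) *\<^sub>v u) (Suc d)"
    unfolding Dm_def by (rule msum_vec[OF _ uc]) simp
  also have "\<dots> = vs n (\<lambda>j. if j = k then c k \<cdot>\<^sub>v u else 0\<^sub>v n) (Suc d)"
  proof (rule vs_cong)
    fix j assume "j < Suc d"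
    hence j: "j \<le> d" by simp
    show "(c j \<cdot>\<^sub>m EK.E j) *\<^sub>v u = (if j = k then c k \<cdot>\<^sub>v u else 0\<^sub>v n)"
      using EK_Uc[OF u k' j] uc by (simp add: smult_mat_mult_vec[of _ n n])
  qed
  also have "\<dots> = c k \<cdot>\<^sub>v u" using uc k' by (simp add: vs_delta)
  finally show ?thesis .
qed

lemma M2_car: "As * Dm th - q^2 \<cdot>\<^sub>m (Dm th * As) \<in> carrier_mat n n"
  by (intro minus_carrier_mat) auto

lemma M2_vec: assumes x: "x \<in> carrier_vec n"
  shows "(As * Dm th - q^2 \<cdot>\<^sub>m (Dm th * As)) *\<^sub>v x = As *\<^sub>v (Dm th *\<^sub>v x) - q^2 \<cdot>\<^sub>v (Dm th *\<^sub>v (As *\<^sub>v x))"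
proof -
  have c: "As * Dm th \<in> carrier_mat n n" "q^2 \<cdot>\<^sub>m (Dm th * As) \<in> carrier_mat n n" by auto
  have "(As * Dm th - q^2 \<cdot>\<^sub>m (Dm th * As)) *\<^sub>v x = (As * Dm th) *\<^sub>v x - (q^2 \<cdot>\<^sub>m (Dm th * As)) *\<^sub>v x"
    by (rule minus_mult_distrib_mat_vec[OF c x])
  also have "(q^2 \<cdot>\<^sub>m (Dm th * As)) *\<^sub>v x = q^2 \<cdot>\<^sub>v ((Dm th * As) *\<^sub>v x)"
    by (rule smult_mat_mult_vec[OF _ x]) auto
  also have "(Dm th * As) *\<^sub>v x = Dm th *\<^sub>v (As *\<^sub>v x)" by (rule assoc_mult_mat_vec[OF Dm_carrier Asc x])
  also have "(As * Dm th) *\<^sub>v x = As *\<^sub>v (Dm th *\<^sub>v x)" by (rule assoc_mult_mat_vec[OF Asc Dm_carrier x])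
  finally show ?thesis .
qed

lemma rel2: "As * Dm th - q^2 \<cdot>\<^sub>m (Dm th * As) = (1 - q^2) \<cdot>\<^sub>m 1\<^sub>m n"
proof (rule agree)
  show "As * Dm th - q^2 \<cdot>\<^sub>m (Dm th * As) \<in> carrier_mat n n" by (rule M2_car)
  show "(1 - q^2) \<cdot>\<^sub>m 1\<^sub>m n \<in> carrier_mat n n" by simp
  fix k u assume k: "k \<le> d" and u: "u \<in> Uc k"
  have uc: "u \<in> carrier_vec n" using u Uc_carrier by blast
  let ?l = "As *\<^sub>v u - ths k \<cdot>\<^sub>v u"
  have l: "?l \<in> Uc (k - 1)" using As_Uc(1)[OF u k] .
  have lc: "?l \<in> carrier_vec n" using uc by simp
  have Asu: "As *\<^sub>v u = ths k \<cdot>\<^sub>v u + ?l" using As_split[OF uc] .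
  have A0u: "Dm th *\<^sub>v u = th k \<cdot>\<^sub>v u" using Dm_Uc[OF u] k by simp
  have A0l: "Dm th *\<^sub>v ?l = th (k - 1) \<cdot>\<^sub>v ?l" using Dm_Uc[OF l] k by simp
  have sc: "(q^2 * th (k - 1) - th k) * ?l $ i = 0" if i: "i < n" for i
  proof (cases k)
    case 0
    then have "?l = 0\<^sub>v n" using As_Uc(2)[OF u k] by simp
    then show ?thesis using i by simp
  next
    case (Suc k')
    then show ?thesis using q2_th[of k'] by simp
  qed
  have "(As * Dm th - q^2 \<cdot>\<^sub>m (Dm th * As)) *\<^sub>v u = As *\<^sub>v (Dm th *\<^sub>v u) - q^2 \<cdot>\<^sub>v (Dm th *\<^sub>v (As *\<^sub>v u))"
    by (rule M2_vec[OF uc])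
  also have "As *\<^sub>v (Dm th *\<^sub>v u) = th k \<cdot>\<^sub>v (ths k \<cdot>\<^sub>v u + ?l)"
    using uc A0u Asu by (simp add: mult_mat_vec[of _ n n])
  also have "Dm th *\<^sub>v (As *\<^sub>v u) = ths k \<cdot>\<^sub>v (th k \<cdot>\<^sub>v u) + th (k - 1) \<cdot>\<^sub>v ?l"
    using uc lc A0u A0l by (subst Asu) (simp add: mult_add_distrib_mat_vec[of _ n n] mult_mat_vec[of _ n n])
  also have "th k \<cdot>\<^sub>v (ths k \<cdot>\<^sub>v u + ?l) - q^2 \<cdot>\<^sub>v (ths k \<cdot>\<^sub>v (th k \<cdot>\<^sub>v u) + th (k - 1) \<cdot>\<^sub>v ?l)
      = (1 - q^2) \<cdot>\<^sub>v u"
  proof (rule eq_vecI)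
    fix i assume "i < dim_vec ((1 - q^2) \<cdot>\<^sub>v u)"
    hence i: "i < n" using uc by simp
    have "(th k \<cdot>\<^sub>v (ths k \<cdot>\<^sub>v u + ?l) - q^2 \<cdot>\<^sub>v (ths k \<cdot>\<^sub>v (th k \<cdot>\<^sub>v u) + th (k - 1) \<cdot>\<^sub>v ?l)) $ i
      = th k * (ths k * u $ i + ?l $ i) - q^2 * (ths k * (th k * u $ i) + th (k - 1) * ?l $ i)"
      using i uc lc by simp
    also have "\<dots> = (1 - q^2) * u $ i" by (rule sc_rel2[OF th_ths sc[OF i]])
    finally show "(th k \<cdot>\<^sub>v (ths k \<cdot>\<^sub>v u + ?l) - q^2 \<cdot>\<^sub>v (ths k \<cdot>\<^sub>v (th k \<cdot>\<^sub>v u) + th (k - 1) \<cdot>\<^sub>v ?l)) $ i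
      = ((1 - q^2) \<cdot>\<^sub>v u) $ i" using i uc by simp
  qed (use uc lc in simp)
  also have "\<dots> = ((1 - q^2) \<cdot>\<^sub>m 1\<^sub>m n) *\<^sub>v u" using uc by (simp add: smult_mat_mult_vec[of _ n n])
  finally show "(As * Dm th - q^2 \<cdot>\<^sub>m (Dm th * As)) *\<^sub>v u = ((1 - q^2) \<cdot>\<^sub>m 1\<^sub>m n) *\<^sub>v u" .
qed

lemma q2_ths': "q^2 * ths i = q powi (int d - 2 * int i + 2)"
proof -
  have "q^2 * ths i = q powi 2 * q powi (int d - 2 * int i)" unfolding ths_def by simp
  also have "\<dots> = q powi (2 + (int d - 2 * int i))" by (rule powi_mult)
  finally show ?thesis by (simp add: algebra_simps)
qed

lemma A0_zero:
  assumes i: "i \<le> d" and j: "j \<le> d" "i > j + 1 \<or> j > i + 1" and x: "x \<in> carrier_vec n"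
  shows "ES.E j *\<^sub>v (Dm th *\<^sub>v (ES.E i *\<^sub>v x)) = 0\<^sub>v n"
proof -
  have "j \<noteq> i" using j by auto
  let ?y = "ES.E i *\<^sub>v x"
  have yc: "?y \<in> carrier_vec n" using x by simp
  let ?z = "ES.E j *\<^sub>v (Dm th *\<^sub>v ?y)"
  have zc: "?z \<in> carrier_vec n" using yc by simp
  have Asy: "As *\<^sub>v ?y = ths i \<cdot>\<^sub>v ?y" using ES.E_comp[OF x i] .
  have "ES.E j *\<^sub>v ((As * Dm th - q^2 \<cdot>\<^sub>m (Dm th * As)) *\<^sub>v ?y) = ths j \<cdot>\<^sub>v ?z - (q^2 * ths i) \<cdot>\<^sub>v ?z"
    unfolding M2_vec[OF yc] using yc j Asy
    by (simp add: mult_minus_distrib_mat_vec[of _ n n] mult_mat_vec[of _ n n] ES.E_X smult_smult_assoc)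
  moreover have "ES.E j *\<^sub>v ((As * Dm th - q^2 \<cdot>\<^sub>m (Dm th * As)) *\<^sub>v ?y) = 0\<^sub>v n"
    unfolding rel2 using yc j i ES.E_E[OF x j(1) i] \<open>j \<noteq> i\<close>
    by (simp add: smult_mat_mult_vec[of _ n n] mult_mat_vec[of _ n n])
  moreover have "(ths j - q^2 * ths i) \<cdot>\<^sub>v ?z = ths j \<cdot>\<^sub>v ?z - (q^2 * ths i) \<cdot>\<^sub>v ?z"
    using zc by (intro eq_vecI) (auto simp: algebra_simps)
  ultimately have "(ths j - q^2 * ths i) \<cdot>\<^sub>v ?z = 0\<^sub>v n" by simp
  moreover have "ths j - q^2 * ths i \<noteq> 0"
  proof
    assume "ths j - q^2 * ths i = 0"
    hence "q powi (int d - 2 * int j) = q powi (int d - 2 * int i + 2)" using q2_ths'[of i] unfolding ths_def by simp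
    hence "int d - 2 * int j = int d - 2 * int i + 2" using qpow_inj[OF q0 qroot] by blast
    thus False using j by simp
  qed
  ultimately show ?thesis using smult_zero_cancel zc by blast
qed

lemma part2_t0: assumes t: "t = 0" and i: "i \<le> d"
  shows "map_image A (mat_image n (prim_idem n d Bs ths i)) \<subseteq> nbr_sum n d Bs ths i"
proof -
  have BK: "Bs = K" using t by (intro eq_matI) auto
  show ?thesis unfolding BK
  proof
    fix z assume "z \<in> map_image A (mat_image n (EK.E i))"
    then obtain w where w: "w \<in> carrier_vec n" and z: "z = A *\<^sub>v (EK.E i *\<^sub>v w)"
      unfolding map_image_def mat_image_def by auto
    obtain g where g: "\<forall>k\<le>d. g k \<in> Uc k" "w = vs n g (Suc d)" using span[OF w] by auto
    have gK: "\<forall>k\<le>d. g k \<in> carrier_vec n \<and> K *\<^sub>v g k = ths k \<cdot>\<^sub>v g k"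
      using g K_Uc Uc_carrier by auto
    have xi: "EK.E i *\<^sub>v w = g i" using EK.E_vs[OF gK i] g by simp
    have x: "g i \<in> Uc i" using g i by simp
    have xc: "g i \<in> carrier_vec n" using x Uc_carrier by blast
    let ?r = "A *\<^sub>v g i - th i \<cdot>\<^sub>v g i"
    have r: "?r \<in> Uc (Suc i)" using A_Uc[OF x i] .
    have rc: "?r \<in> carrier_vec n" using xc by simp
    have set: "set (filter (\<lambda>k. i \<le> k + 1 \<and> k \<le> i + 1) [0..<Suc d]) \<subseteq> {..d}" by auto
    show "z \<in> nbr_sum n d K ths i"
      unfolding nbr_sum_def EK.mem_SS[OF set]
    proof (intro conjI allI impI)
      show "z \<in> carrier_vec n" using z w by simp
      fix j assume "j \<le> d" "j \<notin> set (filter (\<lambda>k. i \<le> k + 1 \<and> k \<le> i + 1) [0..<Suc d])"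
      hence j: "j \<le> d" "j + 1 < i \<or> j > i + 1" by (auto simp del: upt_Suc)
      have Ejr: "EK.E j *\<^sub>v ?r = 0\<^sub>v n"
      proof (cases "Suc i \<le> d")
        case True then show ?thesis using EK_Uc[OF r True j(1)] j by auto
      next
        case False then have "Suc i = Suc d" using i by simp
        then have "?r = 0\<^sub>v n" using Uc_top r by metis
        then show ?thesis by simp
      qed
      have Ejx: "EK.E j *\<^sub>v g i = 0\<^sub>v n" using EK_Uc[OF x i j(1)] j by auto
      have "z = th i \<cdot>\<^sub>v g i + ?r" using z xi A_split[OF xc] by simp
      then show "EK.E j *\<^sub>v z = 0\<^sub>v n" using xc rc Ejr Ejx
        by (simp add: mult_add_distrib_mat_vec[of _ n n] mult_mat_vec[of _ n n])
    qed
  qed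
qed

end


locale TDS1 = TDS +
  assumes t0: "t \<noteq> 0"
begin

abbreviation "D \<equiv> Dm (\<lambda>k. t ^ k)"
abbreviation "Di \<equiv> Dm (\<lambda>k. inverse t ^ k)"

lemma DiD_mat: "Di * D = 1\<^sub>m n"
proof (rule agree)
  show "Di * D \<in> carrier_mat n n" by (rule mult_carrier_mat[OF Dm_carrier Dm_carrier])
  show "1\<^sub>m n \<in> carrier_mat n n" by simp
  fix k u assume k: "k \<le> d" and u: "u \<in> Uc k"
  have uc: "u \<in> carrier_vec n" using u Uc_carrier by blast
  have "(Di * D) *\<^sub>v u = Di *\<^sub>v (D *\<^sub>v u)" by (rule assoc_mult_mat_vec[OF Dm_carrier Dm_carrier uc])
  also have "\<dots> = Di *\<^sub>v (t ^ k \<cdot>\<^sub>v u)" using Dm_Uc[OF u] k by simp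
  also have "\<dots> = t ^ k \<cdot>\<^sub>v (inverse t ^ k \<cdot>\<^sub>v u)" using Dm_Uc[OF u] k uc by (simp add: mult_mat_vec[of _ n n])
  also have "\<dots> = u" using t0 by (simp add: smult_smult_assoc power_mult_distrib[symmetric])
  finally show "(Di * D) *\<^sub>v u = 1\<^sub>m n *\<^sub>v u" using uc by simp
qed

lemma DiD: "v \<in> carrier_vec n \<Longrightarrow> Di *\<^sub>v (D *\<^sub>v v) = v"
  using assoc_mult_mat_vec[OF Dm_carrier Dm_carrier, of v, symmetric] DiD_mat by simp

lemma BsDi_mat: "Bs * Di = Di * As"
proof (rule agree)
  show "Bs * Di \<in> carrier_mat n n" by (rule mult_carrier_mat[OF Bs_carrier Dm_carrier])
  show "Di * As \<in> carrier_mat n n" by (rule mult_carrier_mat[OF Dm_carrier Asc])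
  fix k u assume k: "k \<le> d" and u: "u \<in> Uc k"
  have uc: "u \<in> carrier_vec n" using u Uc_carrier by blast
  define l where "l = As *\<^sub>v u - ths k \<cdot>\<^sub>v u"
  have l: "l \<in> Uc (k - 1)" unfolding l_def using As_Uc(1)[OF u k] .
  have lc: "l \<in> carrier_vec n" unfolding l_def using uc by simp
  have Asu: "As *\<^sub>v u = ths k \<cdot>\<^sub>v u + l" unfolding l_def using As_split[OF uc] .
  have Ku: "K *\<^sub>v u = ths k \<cdot>\<^sub>v u" using K_Uc[OF u] k by simp
  have Diu: "Di *\<^sub>v u = inverse t ^ k \<cdot>\<^sub>v u" using Dm_Uc[OF u] k by simp
  have Dil: "Di *\<^sub>v l = inverse t ^ (k - 1) \<cdot>\<^sub>v l" using Dm_Uc[OF l] k by simp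
  have sc: "(inverse t ^ k * t - inverse t ^ (k - 1)) * l $ i = 0" if i: "i < n" for i
  proof (cases k)
    case 0
    then have "l = 0\<^sub>v n" unfolding l_def using As_Uc(2)[OF u k] by simp
    then show ?thesis using i by simp
  next
    case (Suc k')
    then show ?thesis using t0 by simp
  qed
  have "(Bs * Di) *\<^sub>v u = Bs *\<^sub>v (Di *\<^sub>v u)" by (rule assoc_mult_mat_vec[OF Bs_carrier Dm_carrier uc])
  also have "\<dots> = inverse t ^ k \<cdot>\<^sub>v (t \<cdot>\<^sub>v (ths k \<cdot>\<^sub>v u + l) + (1 - t) \<cdot>\<^sub>v (ths k \<cdot>\<^sub>v u))"
    unfolding Diu using uc by (simp add: mult_mat_vec[of _ n n] Bs_vec Asu Ku)
  also have "\<dots> = ths k \<cdot>\<^sub>v (inverse t ^ k \<cdot>\<^sub>v u) + inverse t ^ (k - 1) \<cdot>\<^sub>v l"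
  proof (rule eq_vecI)
    fix i assume "i < dim_vec (ths k \<cdot>\<^sub>v (inverse t ^ k \<cdot>\<^sub>v u) + inverse t ^ (k - 1) \<cdot>\<^sub>v l)"
    hence i: "i < n" using lc by simp
    show "(inverse t ^ k \<cdot>\<^sub>v (t \<cdot>\<^sub>v (ths k \<cdot>\<^sub>v u + l) + (1 - t) \<cdot>\<^sub>v (ths k \<cdot>\<^sub>v u))) $ i =
      (ths k \<cdot>\<^sub>v (inverse t ^ k \<cdot>\<^sub>v u) + inverse t ^ (k - 1) \<cdot>\<^sub>v l) $ i"
      using i uc lc sc3[OF sc[OF i], of "ths k" "u $ i"] by simp
  qed (use uc lc in simp)
  also have "\<dots> = Di *\<^sub>v (As *\<^sub>v u)"
    using uc lc Diu Dil by (subst Asu) (simp add: mult_add_distrib_mat_vec[of _ n n] mult_mat_vec[of _ n n])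
  also have "\<dots> = (Di * As) *\<^sub>v u" by (rule assoc_mult_mat_vec[OF Dm_carrier Asc uc, symmetric])
  finally show "(Bs * Di) *\<^sub>v u = (Di * As) *\<^sub>v u" .
qed

lemma DADi_mat: "D * A * Di = (1 - t) \<cdot>\<^sub>m Dm th + t \<cdot>\<^sub>m A"
proof (rule agree)
  show "D * A * Di \<in> carrier_mat n n" by (rule mult_carrier_mat[OF mult_carrier_mat[OF Dm_carrier Ac] Dm_carrier])
  show "(1 - t) \<cdot>\<^sub>m Dm th + t \<cdot>\<^sub>m A \<in> carrier_mat n n" by simp
  fix k u assume k: "k \<le> d" and u: "u \<in> Uc k"
  have uc: "u \<in> carrier_vec n" using u Uc_carrier by blast
  define r where "r = A *\<^sub>v u - th k \<cdot>\<^sub>v u"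
  have r: "r \<in> Uc (Suc k)" unfolding r_def using A_Uc[OF u k] .
  have rc: "r \<in> carrier_vec n" unfolding r_def using uc by simp
  have Au: "A *\<^sub>v u = th k \<cdot>\<^sub>v u + r" unfolding r_def using A_split[OF uc] .
  have Diu: "Di *\<^sub>v u = inverse t ^ k \<cdot>\<^sub>v u" using Dm_Uc[OF u] k by simp
  have Du: "D *\<^sub>v u = t ^ k \<cdot>\<^sub>v u" using Dm_Uc[OF u] k by simp
  have Dr: "D *\<^sub>v r = (t ^ k * t) \<cdot>\<^sub>v r" using Dm_Uc[OF r] k by (simp add: mult.commute)
  have A0u: "Dm th *\<^sub>v u = th k \<cdot>\<^sub>v u" using Dm_Uc[OF u] k by simp
  have "(D * A * Di) *\<^sub>v u = D *\<^sub>v (A *\<^sub>v (Di *\<^sub>v u))" by (rule mat3_vec) (use uc in auto)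
  also have "\<dots> = inverse t ^ k \<cdot>\<^sub>v (th k \<cdot>\<^sub>v (t ^ k \<cdot>\<^sub>v u) + (t ^ k * t) \<cdot>\<^sub>v r)"
    unfolding Diu using uc rc Du Dr by (simp add: mult_mat_vec[of _ n n] Au mult_add_distrib_mat_vec[of _ n n])
  also have "\<dots> = (1 - t) \<cdot>\<^sub>v (th k \<cdot>\<^sub>v u) + t \<cdot>\<^sub>v (th k \<cdot>\<^sub>v u + r)"
  proof (rule eq_vecI)
    fix i assume "i < dim_vec ((1 - t) \<cdot>\<^sub>v (th k \<cdot>\<^sub>v u) + t \<cdot>\<^sub>v (th k \<cdot>\<^sub>v u + r))"
    hence i: "i < n" using rc by simp
    have pT: "inverse t ^ k * t ^ k = 1" using t0 by (simp add: power_mult_distrib[symmetric])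
    show "(inverse t ^ k \<cdot>\<^sub>v (th k \<cdot>\<^sub>v (t ^ k \<cdot>\<^sub>v u) + (t ^ k * t) \<cdot>\<^sub>v r)) $ i =
        ((1 - t) \<cdot>\<^sub>v (th k \<cdot>\<^sub>v u) + t \<cdot>\<^sub>v (th k \<cdot>\<^sub>v u + r)) $ i"
      using i uc rc sc4[OF pT, of "th k" "u $ i" t "r $ i"] by simp
  qed (use uc rc in simp)
  also have "\<dots> = ((1 - t) \<cdot>\<^sub>m Dm th + t \<cdot>\<^sub>m A) *\<^sub>v u"
    using uc A0u Au by (simp add: add_mult_distrib_mat_vec[of _ n n] smult_mat_mult_vec[of _ n n])
  finally show "(D * A * Di) *\<^sub>v u = ((1 - t) \<cdot>\<^sub>m Dm th + t \<cdot>\<^sub>m A) *\<^sub>v u" .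
qed

sublocale EB: edec n d Bs ths
proof
  show "Bs \<in> carrier_mat n n" by simp
  show "inj_on ths {0..d}" by (rule ths_inj)
  fix v :: "'a vec" assume v: "v \<in> carrier_vec n"
  let ?y = "D *\<^sub>v v"
  have yc: "?y \<in> carrier_vec n" using v by simp
  let ?f = "\<lambda>k. Di *\<^sub>v (ES.E k *\<^sub>v ?y)"
  show "\<exists>f. (\<forall>k\<le>d. f k \<in> carrier_vec n \<and> Bs *\<^sub>v f k = ths k \<cdot>\<^sub>v f k) \<and> v = vs n f (Suc d)"
  proof (intro exI[of _ ?f] conjI allI impI)
    fix k assume k: "k \<le> d"
    show "?f k \<in> carrier_vec n" using yc by simp
    have "Bs *\<^sub>v ?f k = (Bs * Di) *\<^sub>v (ES.E k *\<^sub>v ?y)"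
      using yc by (simp add: assoc_mult_mat_vec[OF Bs_carrier Dm_carrier])
    also have "\<dots> = Di *\<^sub>v (As *\<^sub>v (ES.E k *\<^sub>v ?y))"
      unfolding BsDi_mat using yc by (simp add: assoc_mult_mat_vec[OF Dm_carrier Asc])
    also have "\<dots> = ths k \<cdot>\<^sub>v ?f k" using ES.E_comp[OF yc k] yc by (simp add: mult_mat_vec[of _ n n])
    finally show "Bs *\<^sub>v ?f k = ths k \<cdot>\<^sub>v ?f k" .
  next
    have "vs n ?f (Suc d) = Di *\<^sub>v vs n (\<lambda>k. ES.E k *\<^sub>v ?y) (Suc d)"
      using yc by (subst vs_mat[OF Dm_carrier]) auto
    also have "\<dots> = Di *\<^sub>v ?y" using ES.E_sum[OF yc] by simp
    also have "\<dots> = v" using DiD[OF v] .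
    finally show "v = vs n ?f (Suc d)" by simp
  qed
qed

lemma EB_formula: assumes v: "v \<in> carrier_vec n" and j: "j \<le> d"
  shows "EB.E j *\<^sub>v v = Di *\<^sub>v (ES.E j *\<^sub>v (D *\<^sub>v v))"
proof -
  let ?y = "D *\<^sub>v v"
  have yc: "?y \<in> carrier_vec n" using v by simp
  let ?f = "\<lambda>k. Di *\<^sub>v (ES.E k *\<^sub>v ?y)"
  have f: "\<forall>k\<le>d. ?f k \<in> carrier_vec n \<and> Bs *\<^sub>v ?f k = ths k \<cdot>\<^sub>v ?f k"
  proof (intro allI impI conjI)
    fix k assume k: "k \<le> d"
    show "?f k \<in> carrier_vec n" using yc by simp
    have "Bs *\<^sub>v ?f k = (Bs * Di) *\<^sub>v (ES.E k *\<^sub>v ?y)"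
      using yc by (simp add: assoc_mult_mat_vec[OF Bs_carrier Dm_carrier])
    also have "\<dots> = Di *\<^sub>v (As *\<^sub>v (ES.E k *\<^sub>v ?y))"
      unfolding BsDi_mat using yc by (simp add: assoc_mult_mat_vec[OF Dm_carrier Asc])
    also have "\<dots> = ths k \<cdot>\<^sub>v ?f k" using ES.E_comp[OF yc k] yc by (simp add: mult_mat_vec[of _ n n])
    finally show "Bs *\<^sub>v ?f k = ths k \<cdot>\<^sub>v ?f k" .
  qed
  have "vs n ?f (Suc d) = Di *\<^sub>v vs n (\<lambda>k. ES.E k *\<^sub>v ?y) (Suc d)"
    using yc by (subst vs_mat[OF Dm_carrier]) auto
  also have "\<dots> = Di *\<^sub>v ?y" using ES.E_sum[OF yc] by simp
  also have "\<dots> = v" using DiD[OF v] .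
  finally have "v = vs n ?f (Suc d)" by simp
  then show ?thesis using EB.E_vs[OF f j] by simp
qed

lemma part2_zero:
  assumes i: "i \<le> d" and w: "w \<in> carrier_vec n" and j: "j \<le> d" "j + 1 < i \<or> j > i + 1"
  shows "EB.E j *\<^sub>v (A *\<^sub>v (EB.E i *\<^sub>v w)) = 0\<^sub>v n"
proof -
  let ?y0 = "ES.E i *\<^sub>v (D *\<^sub>v w)"
  have y0c: "?y0 \<in> carrier_vec n" using w by simp
  have x: "EB.E i *\<^sub>v w = Di *\<^sub>v ?y0" using EB_formula[OF w i] .
  have "D *\<^sub>v (A *\<^sub>v (Di *\<^sub>v ?y0)) = (D * A * Di) *\<^sub>v ?y0" by (rule mat3_vec[symmetric]) (use y0c in auto)
  also have "\<dots> = (1 - t) \<cdot>\<^sub>v (Dm th *\<^sub>v ?y0) + t \<cdot>\<^sub>v (A *\<^sub>v ?y0)"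
    unfolding DADi_mat using y0c by (simp add: add_mult_distrib_mat_vec[of _ n n] smult_mat_mult_vec[of _ n n])
  finally have DA: "D *\<^sub>v (A *\<^sub>v (Di *\<^sub>v ?y0)) = (1 - t) \<cdot>\<^sub>v (Dm th *\<^sub>v ?y0) + t \<cdot>\<^sub>v (A *\<^sub>v ?y0)" .
  have z1: "ES.E j *\<^sub>v (Dm th *\<^sub>v ?y0) = 0\<^sub>v n" using A0_zero[OF i j(1) _] j w by auto
  have z2: "ES.E j *\<^sub>v (A *\<^sub>v ?y0) = 0\<^sub>v n" using TDA[OF j(1) i _] j w by auto
  have "ES.E j *\<^sub>v (D *\<^sub>v (A *\<^sub>v (Di *\<^sub>v ?y0))) = 0\<^sub>v n"
    unfolding DA using y0c z1 z2 by (simp add: mult_add_distrib_mat_vec[of _ n n] mult_mat_vec[of _ n n])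
  then show ?thesis unfolding x using EB_formula[of "A *\<^sub>v (Di *\<^sub>v ?y0)" j] y0c j by simp
qed

lemma part2: assumes i: "i \<le> d"
  shows "map_image A (mat_image n (EB.E i)) \<subseteq> nbr_sum n d Bs ths i"
proof
  fix z assume "z \<in> map_image A (mat_image n (EB.E i))"
  then obtain w where w: "w \<in> carrier_vec n" and z: "z = A *\<^sub>v (EB.E i *\<^sub>v w)"
    unfolding map_image_def mat_image_def by auto
  have set: "set (filter (\<lambda>k. i \<le> k + 1 \<and> k \<le> i + 1) [0..<Suc d]) \<subseteq> {..d}" by auto
  show "z \<in> nbr_sum n d Bs ths i"
    unfolding nbr_sum_def EB.mem_SS[OF set]
  proof (intro conjI allI impI)
    show "z \<in> carrier_vec n" using z w by simp
    fix j assume "j \<le> d" "j \<notin> set (filter (\<lambda>k. i \<le> k + 1 \<and> k \<le> i + 1) [0..<Suc d])"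
    hence j: "j \<le> d" "j + 1 < i \<or> j > i + 1" by (auto simp del: upt_Suc)
    show "EB.E j *\<^sub>v z = 0\<^sub>v n" using part2_zero[OF i w j] z by simp
  qed
qed

end

theorem lemma7p13:
  fixes n d :: nat and q t :: "'a::field" and A As K :: "'a mat"
  assumes "alg_closed_field TYPE('a)"
    and "n > 0"
    and "q \<noteq> 0" and "\<forall>m::nat. m > 0 \<longrightarrow> q ^ m \<noteq> 1"
    and "d \<ge> 1"
    and "tridiagonal_system n d A (\<lambda>i. q powi (2 * int i - int d))
                               As (\<lambda>i. q powi (int d - 2 * int i))"
    and "q_serre q A As"
    and "K \<in> carrier_mat n n"
    and "\<forall>i\<le>d. \<forall>u \<in> split_comp n d A (\<lambda>i. q powi (2 * int i - int d))
                                As (\<lambda>i. q powi (int d - 2 * int i)) i.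
            K *\<^sub>v u = (q powi (int d - 2 * int i)) \<cdot>\<^sub>v u"
  shows "\<forall>i\<le>d.
     map_image (t \<cdot>\<^sub>m As + (1 - t) \<cdot>\<^sub>m K)
        (mat_image n (prim_idem n d A (\<lambda>i. q powi (2 * int i - int d)) i))
       \<subseteq> nbr_sum n d A (\<lambda>i. q powi (2 * int i - int d)) i
   \<and> map_image A
        (mat_image n (prim_idem n d (t \<cdot>\<^sub>m As + (1 - t) \<cdot>\<^sub>m K) (\<lambda>i. q powi (int d - 2 * int i)) i))
       \<subseteq> nbr_sum n d (t \<cdot>\<^sub>m As + (1 - t) \<cdot>\<^sub>m K) (\<lambda>i. q powi (int d - 2 * int i)) i"
proof -
  interpret T: TDS n d q t A As K "\<lambda>i. q powi (2 * int i - int d)" "\<lambda>i. q powi (int d - 2 * int i)"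
    by unfold_locales (use assms in auto)
  show ?thesis
  proof (intro allI impI conjI)
    fix i assume i: "i \<le> d"
    show "map_image (t \<cdot>\<^sub>m As + (1 - t) \<cdot>\<^sub>m K)
        (mat_image n (prim_idem n d A (\<lambda>i. q powi (2 * int i - int d)) i))
       \<subseteq> nbr_sum n d A (\<lambda>i. q powi (2 * int i - int d)) i"
      by (rule T.part1[OF i])
    show "map_image A
        (mat_image n (prim_idem n d (t \<cdot>\<^sub>m As + (1 - t) \<cdot>\<^sub>m K) (\<lambda>i. q powi (int d - 2 * int i)) i))
       \<subseteq> nbr_sum n d (t \<cdot>\<^sub>m As + (1 - t) \<cdot>\<^sub>m K) (\<lambda>i. q powi (int d - 2 * int i)) i"
    proof (cases "t = 0")
      case True
      then show ?thesis by (rule T.part2_t0[OF _ i])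
    next
      case False
      interpret T1: TDS1 n d q t A As K "\<lambda>i. q powi (2 * int i - int d)" "\<lambda>i. q powi (int d - 2 * int i)"
        by unfold_locales (rule False)
      show ?thesis by (rule T1.part2[OF i])
    qed
  qed
qed

end
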